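(* Assume $r_0>-\infty$ and $\mathbb E[(\min\{t_1^+,\dots,t_{2d}^+\})^d]<\infty$. Then the restricted path shape functions $g,g^o$ (extended to $\mathcal U$ by radial limits) satisfy the following. (i) $g(0)=r_0$ and $g^o(0)=r_0\wedge0$. (ii) If $r_0\le0$ then $g=g^o$ on all of $\mathcal U$. If $r_0>0$ then $g>g^o$ in an open neighborhood of the origin. (iii) For all $\xi\in\mathbb R^d\setminus\{0\}$ and $\alpha\ge|\xi|_1$, $$\alpha g^o(\xi/\alpha)=\inf_{\tau:\,|\xi|_1\le\tau\le\alpha}\tau g(\xi/\tau),$$ and the infimum on the right is attained at some $\tau\in[|\xi|_1,\alpha]$. In particular, $|\xi|_1=1$ implies $g^o(\xi)=g(\xi)$. (iv) For $\diamond\in\{\text{none},o\}$ (with $g^{\text{none}}=g$), the extended function $g^\diamond$ is convex and lower semicontinuous on $\mathcal U$.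
   Context: Let $d\ge2$. The edge weights $\{t(e)\}$ on the undirected nearest-neighbor edges of $\mathbb Z^d$ are i.i.d. real, and $t_i$ are i.i.d. copies with $t_i^+=t_i\vee0$. Set $r_0=\operatorname{ess\,inf}t(e)$ and $\mathcal U=\{|\xi|_1\le1\}$. Let $G_{0,(n),x}$ (respectively $G^o_{0,(n),x}$) be the minimal passage time over $n$-step paths from $0$ to $x$ with steps in $\{\pm e_i\}$ (respectively in $\{\pm e_i\}\cup\{0\}$, with zero steps of weight $0$). Let $\mathcal D_n$ and $\mathcal D^o_n$ be the corresponding sets of reachable points. $g$ and $g^o$ are the deterministic continuous convex functions on $\{|\xi|_1<1\}$ such that a.s. $n^{-1}G_{0,(k_n),x_n}\to\alpha g(\xi/\alpha)$ and $n^{-1}G^o_{0,(k_n),y_n}\to\alpha g^o(\xi/\alpha)$ whenever $\alpha>|\xi|_1$, $k_n/n\to\alpha$, $x_n\in\mathcal D_{k_n}$, $y_n\in\mathcal D^o_{k_n}$, $x_n/n,y_n/n\to\xi$. For $|\xi|_1=1$, set $g^\diamond(\xi)=\lim_{t\nearrow1}g^\diamond(t\xi)\in(-\infty,\infty]$. *)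

theory Defs
  imports "HOL-Probability.Probability"
begin

text \<open>The undirected nearest-neighbour edge between x and x + e_i
  is encoded as the pair (x, i).
  A zero step (lazy step, weight 0) is None in the option type.\<close>

type_synonym 'd edge = "(int^'d) \<times> 'd"

definition unitv :: "'d::finite \<Rightarrow> int^'d" where
  "unitv i = (\<chi> j. if j = i then 1 else 0)"

definition stepvec :: "'d::finite \<times> bool \<Rightarrow> int^'d" where
  "stepvec s = (if snd s then unitv (fst s) else - unitv (fst s))"

definition step_edge :: "int^'d \<Rightarrow> 'd::finite \<times> bool \<Rightarrow> 'd edge" where
  "step_edge x s = (if snd s then (x, fst s) else (x - unitv (fst s), fst s))"

text \<open>Passage time of the path starting at x and following the steps ss
  (edge weights are summed with multiplicity).\<close>
fun path_weight :: "('d::finite edge \<Rightarrow> real) \<Rightarrow> int^'d \<Rightarrow> ('d \<times> bool) list \<Rightarrow> real" where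
  "path_weight w x [] = 0"
| "path_weight w x (s # ss) = w (step_edge x s) + path_weight w (x + stepvec s) ss"

definition stepvec_o :: "('d::finite \<times> bool) option \<Rightarrow> int^'d" where
  "stepvec_o s = (case s of None \<Rightarrow> 0 | Some s' \<Rightarrow> stepvec s')"

fun path_weight_o :: "('d::finite edge \<Rightarrow> real) \<Rightarrow> int^'d \<Rightarrow> ('d \<times> bool) option list \<Rightarrow> real" where
  "path_weight_o w x [] = 0"
| "path_weight_o w x (s # ss) =
     (case s of None \<Rightarrow> 0 | Some s' \<Rightarrow> w (step_edge x s')) + path_weight_o w (x + stepvec_o s) ss"

definition reach :: "nat \<Rightarrow> (int^'d::finite) set" where
  "reach n = {sum_list (map stepvec ss) | ss. length ss = n}"

definition reach_o :: "nat \<Rightarrow> (int^'d::finite) set" where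
  "reach_o n = {sum_list (map stepvec_o ss) | ss. length ss = n}"

definition Gpp :: "('d::finite edge \<Rightarrow> real) \<Rightarrow> nat \<Rightarrow> int^'d \<Rightarrow> real" where
  "Gpp w n x = Min {path_weight w 0 ss | ss. length ss = n \<and> sum_list (map stepvec ss) = x}"

definition Gpp_o :: "('d::finite edge \<Rightarrow> real) \<Rightarrow> nat \<Rightarrow> int^'d \<Rightarrow> real" where
  "Gpp_o w n x = Min {path_weight_o w 0 ss | ss. length ss = n \<and> sum_list (map stepvec_o ss) = x}"

definition norm1 :: "real^'d::finite \<Rightarrow> real" where
  "norm1 \<xi> = (\<Sum>i\<in>UNIV. \<bar>\<xi> $ i\<bar>)"

definition of_intvec :: "int^'d::finite \<Rightarrow> real^'d" where
  "of_intvec x = (\<chi> i. real_of_int (x $ i))"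

definition radial_ext :: "(real^'d::finite \<Rightarrow> real) \<Rightarrow> real^'d \<Rightarrow> ereal" where
  "radial_ext g \<xi> = (if norm1 \<xi> < 1 then ereal (g \<xi>)
                     else Lim (at_left (1::real)) (\<lambda>s. ereal (g (s *\<^sub>R \<xi>))))"

definition convex_ereal_on :: "(real^'d::finite) set \<Rightarrow> (real^'d \<Rightarrow> ereal) \<Rightarrow> bool" where
  "convex_ereal_on S f \<longleftrightarrow> (\<forall>x\<in>S. \<forall>y\<in>S. \<forall>a::real. 0 < a \<and> a < 1 \<longrightarrow>
      f (a *\<^sub>R x + (1 - a) *\<^sub>R y) \<le> ereal a * f x + ereal (1 - a) * f y)"

definition lsc_ereal_on :: "(real^'d::finite) set \<Rightarrow> (real^'d \<Rightarrow> ereal) \<Rightarrow> bool" where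
  "lsc_ereal_on S f \<longleftrightarrow> (\<forall>x\<in>S. f x \<le> Liminf (at x within S) f)"

definition ess_inf :: "'a measure \<Rightarrow> ('a \<Rightarrow> real) \<Rightarrow> ereal" where
  "ess_inf M X = Sup {ereal c | c. AE \<omega> in M. c \<le> X \<omega>}"

definition origin_edges :: "('d::finite edge) set" where
  "origin_edges = {(0, i) | i. True} \<union> {(- unitv i, i) | i. True}"

end

theory Submission
  imports Defs
begin

definition l1i :: "int^'d::finite \<Rightarrow> int" where
  "l1i x = (\<Sum>i\<in>UNIV. \<bar>x $ i\<bar>)"

definition csum :: "int^'d::finite \<Rightarrow> int" where
  "csum x = (\<Sum>i\<in>UNIV. x $ i)"

lemma unitv_nth: "unitv i $ j = (if j = i then 1 else 0)"
  by (simp add: unitv_def)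

lemma stepvec_nth: "stepvec s $ j = (if j = fst s then (if snd s then 1 else -1) else 0)"
  by (simp add: stepvec_def unitv_def)

lemma l1i_nonneg: "0 \<le> l1i x"
  by (simp add: l1i_def sum_nonneg)

lemma l1i_zero: "l1i x = 0 \<longleftrightarrow> x = 0"
proof
  assume "l1i x = 0"
  then have "\<forall>i\<in>UNIV. \<bar>x $ i\<bar> = 0"
    unfolding l1i_def by (subst sum_nonneg_eq_0_iff[symmetric]) auto
  then show "x = 0" by (simp add: vec_eq_iff)
qed (simp add: l1i_def)

lemma sum_single_upd:
  fixes f :: "'d::finite \<Rightarrow> int"
  shows "(\<Sum>j\<in>UNIV. f j + (if j = i then c else 0)) = (\<Sum>j\<in>UNIV. f j) + c"
  by (simp add: sum.distrib)

lemma l1i_step: "l1i (x + stepvec s) \<le> l1i x + 1"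
proof -
  have "\<bar>(x + stepvec s) $ j\<bar> \<le> \<bar>x $ j\<bar> + (if j = fst s then 1 else 0)" for j
    by (auto simp: stepvec_nth)
  then have "l1i (x + stepvec s) \<le> (\<Sum>j\<in>UNIV. \<bar>x $ j\<bar> + (if j = fst s then 1 else 0))"
    unfolding l1i_def by (intro sum_mono) auto
  also have "\<dots> = l1i x + 1" unfolding l1i_def by (rule sum_single_upd)
  finally show ?thesis .
qed

lemma csum_step: "csum (x + stepvec s) = csum x + (if snd s then 1 else -1)"
proof -
  have "csum (x + stepvec s) = (\<Sum>j\<in>UNIV. x $ j + (if j = fst s then (if snd s then 1 else -1) else 0))"
    unfolding csum_def by (simp add: stepvec_nth)
  also have "\<dots> = csum x + (if snd s then 1 else -1)"
    unfolding csum_def by (rule sum_single_upd)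
  finally show ?thesis .
qed

lemma even_l1i_csum: "even (l1i x - csum x)"
proof -
  have "l1i x - csum x = (\<Sum>j\<in>UNIV. \<bar>x $ j\<bar> - x $ j)"
    by (simp add: l1i_def csum_def sum_subtractf)
  moreover have "even (\<bar>x $ j\<bar> - x $ j)" for j by (cases "x $ j \<ge> 0") auto
  ultimately show ?thesis by (simp add: dvd_sum)
qed

lemma sum_path_props:
  "l1i (sum_list (map stepvec ss)) \<le> int (length ss) \<and>
   even (int (length ss) - csum (sum_list (map stepvec ss)))"
proof (induction ss)
  case Nil then show ?case by (simp add: l1i_def csum_def)
next
  case (Cons s ss)
  let ?x = "sum_list (map stepvec ss)"
  have e: "sum_list (map stepvec (s # ss)) = ?x + stepvec s" by (simp add: add.commute)
  show ?case unfolding e using Cons l1i_step[of ?x s] csum_step[of ?x s] by auto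
qed

lemma reach_nec:
  assumes "x \<in> reach k"
  shows "l1i x \<le> int k \<and> even (int k - l1i x)"
proof -
  obtain ss where ss: "length ss = k" "x = sum_list (map stepvec ss)"
    using assms by (auto simp: reach_def)
  have 1: "l1i x \<le> int k" "even (int k - csum x)" using sum_path_props[of ss] ss by auto
  have "int k - l1i x = (int k - csum x) - (l1i x - csum x)" by simp
  with 1 even_l1i_csum[of x] show ?thesis by presburger
qed

definition bnc :: "'d \<Rightarrow> nat \<Rightarrow> ('d \<times> bool) list" where
  "bnc i j = concat (replicate j [(i, True), (i, False)])"

lemma bnc_len: "length (bnc i j) = 2 * j"
  by (induction j) (auto simp: bnc_def)

lemma stepvec_pair: "stepvec (i, True) + stepvec (i, False) = 0"
  by (simp add: stepvec_def)

lemma bnc_sum: "sum_list (map stepvec (bnc i j)) = 0"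
  by (induction j) (auto simp: bnc_def stepvec_pair)

lemma path_weight_append:
  "path_weight w x (ss @ tt) = path_weight w x ss + path_weight w (x + sum_list (map stepvec ss)) tt"
  by (induction ss arbitrary: x) (auto simp: add.assoc)

lemma bnc_weight: "path_weight w x (bnc i j) = 2 * real j * w (x, i)"
proof (induction j)
  case 0 then show ?case by (simp add: bnc_def)
next
  case (Suc j)
  have "bnc i (Suc j) = [(i, True), (i, False)] @ bnc i j" by (simp add: bnc_def)
  then show ?case using Suc
    by (simp add: path_weight_append stepvec_pair step_edge_def stepvec_def algebra_simps)
qed

lemma reach_suff_aux:
  "\<And>x k. nat (l1i x) = n \<Longrightarrow> l1i x \<le> int k \<Longrightarrow> even (int k - l1i x) \<Longrightarrow>
    \<exists>ss. length ss = k \<and> sum_list (map stepvec ss) = (x :: int^'d::finite)"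
proof (induction n)
  case 0
  then have x0: "x = 0" using l1i_nonneg[of x] l1i_zero[of x] by auto
  then have "even k" using 0 by (simp add: l1i_def)
  then obtain j where "k = 2 * j" by blast
  then show ?case using x0 bnc_len bnc_sum by metis
next
  case (Suc n)
  have "x \<noteq> 0"
  proof
    assume "x = 0"
    then have "l1i x = 0" by (simp add: l1i_zero)
    with Suc.prems show False by simp
  qed
  then obtain i where xi: "x $ i \<noteq> 0" by (auto simp: vec_eq_iff)
  define s where "s = (i, x $ i > 0)"
  define x' where "x' = x - stepvec s"
  have "l1i x = (\<Sum>j\<in>UNIV. \<bar>x' $ j\<bar> + (if j = i then 1 else 0))"
    unfolding l1i_def x'_def s_def using xi
    by (intro sum.cong) (auto simp: stepvec_nth)
  then have l: "l1i x = l1i x' + 1" unfolding l1i_def by (simp add: sum_single_upd)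
  have "k \<ge> 1" using Suc.prems l l1i_nonneg[of x'] by linarith
  have p1: "nat (l1i x') = n" using Suc.prems(1) l by simp
  have p2: "l1i x' \<le> int (k - 1)" using Suc.prems(2) l \<open>k \<ge> 1\<close> by simp
  have p3: "even (int (k - 1) - l1i x')"
  proof -
    have "int (k - 1) - l1i x' = int k - l1i x" using l \<open>k \<ge> 1\<close> by simp
    then show ?thesis using Suc.prems(3) by simp
  qed
  obtain ss where ss: "length ss = k - 1" "sum_list (map stepvec ss) = x'"
    using Suc.IH[OF p1 p2 p3] by blast
  show ?case
    by (rule exI[of _ "s # ss"]) (use ss \<open>k \<ge> 1\<close> in \<open>auto simp: x'_def\<close>)
qed

lemma reach_suff:
  assumes "l1i x \<le> int k" "even (int k - l1i x)"
  shows "x \<in> reach k"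
  using reach_suff_aux[OF refl assms] by (auto simp: reach_def)

fun den :: "'a option list \<Rightarrow> 'a list" where
  "den [] = []"
| "den (None # ss) = den ss"
| "den (Some s # ss) = s # den ss"

lemma den_len: "length (den ss) \<le> length ss"
  by (induction ss rule: den.induct) auto

lemma den_sum: "sum_list (map stepvec_o ss) = sum_list (map stepvec (den ss))"
  by (induction ss rule: den.induct) (auto simp: stepvec_o_def)

lemma den_weight: "path_weight_o w x ss = path_weight w x (den ss)"
  by (induction ss arbitrary: x rule: den.induct) (auto simp: stepvec_o_def)

lemma stepvec_o_None[simp]: "stepvec_o None = 0" by (simp add: stepvec_o_def)
lemma stepvec_o_Some[simp]: "stepvec_o (Some s) = stepvec s" by (simp add: stepvec_o_def)
lemma stepvec_o_comp_Some[simp]: "stepvec_o \<circ> Some = stepvec" by (simp add: fun_eq_iff)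
lemma sum_list_rep0[simp]: "sum_list (replicate j (0::'a::monoid_add)) = 0" by (induction j) auto

lemma pad_sum: "sum_list (map stepvec_o (map Some ss @ replicate j None)) = sum_list (map stepvec ss)"
  by simp

lemma den_pad: "den (map Some ss @ replicate j None) = ss"
proof -
  have "den (replicate j None) = []" by (induction j) auto
  moreover have "den (map Some ss @ r) = ss @ den r" for r :: "'a option list"
    by (induction ss) auto
  ultimately show ?thesis by simp
qed

lemma reach_sub_reach_o: "x \<in> reach j \<Longrightarrow> j \<le> k \<Longrightarrow> x \<in> reach_o k"
proof -
  assume "x \<in> reach j" "j \<le> k"
  then obtain ss where ss: "length ss = j" "x = sum_list (map stepvec ss)" by (auto simp: reach_def)
  show "x \<in> reach_o k" unfolding reach_o_def
    by (rule CollectI, rule exI[of _ "map Some ss @ replicate (k - j) None"])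
       (use ss \<open>j \<le> k\<close> in \<open>simp add: pad_sum\<close>)
qed

lemma fin_paths: "finite {f ss |ss. length ss = n \<and> P ss}" for f :: "('a::finite) list \<Rightarrow> 'b"
proof -
  have "finite {ss :: 'a list. set ss \<subseteq> UNIV \<and> length ss = n}"
    by (rule finite_lists_length_eq) simp
  then have "finite (f ` {ss. set ss \<subseteq> UNIV \<and> length ss = n})" by simp
  then show ?thesis by (rule rev_finite_subset) auto
qed

lemma Gpp_le: "length ss = n \<Longrightarrow> sum_list (map stepvec ss) = x \<Longrightarrow> Gpp w n x \<le> path_weight w 0 ss"
  unfolding Gpp_def by (rule Min_le[OF fin_paths]) blast

lemma Gpp_attained: "x \<in> reach n \<Longrightarrow>
   \<exists>ss. length ss = n \<and> sum_list (map stepvec ss) = x \<and> Gpp w n x = path_weight w 0 ss"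
proof -
  assume "x \<in> reach n"
  then have ne: "{path_weight w 0 ss |ss. length ss = n \<and> sum_list (map stepvec ss) = x} \<noteq> {}"
    by (auto simp: reach_def)
  have "Gpp w n x \<in> {path_weight w 0 ss |ss. length ss = n \<and> sum_list (map stepvec ss) = x}"
    unfolding Gpp_def by (rule Min_in[OF fin_paths ne])
  then show ?thesis by auto
qed

lemma Gpp_o_le: "length ss = n \<Longrightarrow> sum_list (map stepvec_o ss) = x \<Longrightarrow> Gpp_o w n x \<le> path_weight_o w 0 ss"
  unfolding Gpp_o_def by (rule Min_le[OF fin_paths]) blast

lemma Gpp_o_attained: "x \<in> reach_o n \<Longrightarrow>
   \<exists>ss. length ss = n \<and> sum_list (map stepvec_o ss) = x \<and> Gpp_o w n x = path_weight_o w 0 ss"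
proof -
  assume "x \<in> reach_o n"
  then have ne: "{path_weight_o w 0 ss |ss. length ss = n \<and> sum_list (map stepvec_o ss) = x} \<noteq> {}"
    by (auto simp: reach_o_def)
  have "Gpp_o w n x \<in> {path_weight_o w 0 ss |ss. length ss = n \<and> sum_list (map stepvec_o ss) = x}"
    unfolding Gpp_o_def by (rule Min_in[OF fin_paths ne])
  then show ?thesis by auto
qed

lemma pw_lower: "(\<And>e. r \<le> w e) \<Longrightarrow> real (length ss) * r \<le> path_weight w x ss"
proof (induction ss arbitrary: x)
  case Nil then show ?case by simp
next
  case (Cons s ss)
  have "r \<le> w (step_edge x s)" by (rule Cons.prems)
  moreover have "real (length ss) * r \<le> path_weight w (x + stepvec s) ss" by (rule Cons.IH[OF Cons.prems])
  ultimately show ?case by (simp add: algebra_simps)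
qed

lemma pwo_lower: "(\<And>e. r \<le> w e) \<Longrightarrow> real (length ss) * min r 0 \<le> path_weight_o w x ss"
proof (induction ss arbitrary: x)
  case Nil then show ?case by simp
next
  case (Cons s ss)
  have "min r 0 \<le> (case s of None \<Rightarrow> 0 | Some s' \<Rightarrow> w (step_edge x s'))"
    using Cons.prems by (cases s) (auto simp: min_le_iff_disj)
  moreover have "real (length ss) * min r 0 \<le> path_weight_o w (x + stepvec_o s) ss" by (rule Cons.IH[OF Cons.prems])
  ultimately show ?case by (simp add: algebra_simps)
qed

lemma Gpp_lower: "(\<And>e. r \<le> w e) \<Longrightarrow> x \<in> reach n \<Longrightarrow> real n * r \<le> Gpp w n x"
  using Gpp_attained[of x n w] pw_lower[of r w] by metis

lemma Gpp_o_lower: "(\<And>e. r \<le> w e) \<Longrightarrow> x \<in> reach_o n \<Longrightarrow> real n * min r 0 \<le> Gpp_o w n x"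
  using Gpp_o_attained[of x n w] pwo_lower[of r w] by metis

lemma Gpp_o_le_Gpp: "x \<in> reach j \<Longrightarrow> j \<le> k \<Longrightarrow> Gpp_o w k x \<le> Gpp w j x"
proof -
  assume a: "x \<in> reach j" "j \<le> k"
  obtain ss where ss: "length ss = j" "sum_list (map stepvec ss) = x" "Gpp w j x = path_weight w 0 ss"
    using Gpp_attained[OF a(1)] by blast
  have "Gpp_o w k x \<le> path_weight_o w 0 (map Some ss @ replicate (k - j) None)"
    by (rule Gpp_o_le) (use ss a in \<open>auto simp: pad_sum\<close>)
  also have "\<dots> = Gpp w j x" by (simp add: den_weight den_pad ss)
  finally show ?thesis .
qed

lemma Gpp_o_ge: "x \<in> reach_o k \<Longrightarrow> \<exists>m\<le>k. x \<in> reach m \<and> Gpp w m x \<le> Gpp_o w k x"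
proof -
  assume a: "x \<in> reach_o k"
  obtain ss where ss: "length ss = k" "sum_list (map stepvec_o ss) = x" "Gpp_o w k x = path_weight_o w 0 ss"
    using Gpp_o_attained[OF a] by blast
  have r: "x \<in> reach (length (den ss))" using ss by (auto simp: reach_def den_sum)
  have "Gpp w (length (den ss)) x \<le> path_weight w 0 (den ss)"
    by (rule Gpp_le) (use ss in \<open>auto simp: den_sum\<close>)
  also have "\<dots> = Gpp_o w k x" using ss by (simp add: den_weight)
  finally show ?thesis using r den_len[of ss] ss by auto
qed

lemma Gpp_loop:
  assumes "sum_list (map stepvec l) = 0" "x \<in> reach m"
  shows "Gpp w (length l + m) x \<le> path_weight w 0 l + Gpp w m x"
proof -
  obtain ss where ss: "length ss = m" "sum_list (map stepvec ss) = x" "Gpp w m x = path_weight w 0 ss"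
    using Gpp_attained[OF assms(2)] by blast
  have "Gpp w (length l + m) x \<le> path_weight w 0 (l @ ss)"
    by (rule Gpp_le) (use ss assms in auto)
  also have "\<dots> = path_weight w 0 l + Gpp w m x"
    by (simp add: path_weight_append assms ss)
  finally show ?thesis .
qed

lemma detour_loop:
  "\<exists>L W. \<forall>j. \<exists>l. length l = 2 * L + 2 * j \<and> sum_list (map stepvec l) = 0 \<and>
      path_weight w 0 l = W + 2 * real j * w (z, i)"
proof -
  have "z \<in> reach (nat (l1i z))" by (rule reach_suff) (auto simp: l1i_nonneg)
  then obtain p where p: "sum_list (map stepvec p) = z" "length p = nat (l1i z)" by (auto simp: reach_def)
  have "l1i (- z) = l1i z" by (simp add: l1i_def)
  then have "- z \<in> reach (nat (l1i z))" by (intro reach_suff) (auto simp: l1i_nonneg)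
  then obtain q where q: "sum_list (map stepvec q) = - z" "length q = nat (l1i z)" by (auto simp: reach_def)
  show ?thesis
  proof (intro exI allI)
    fix j
    let ?l = "p @ bnc i j @ q"
    show "length ?l = 2 * nat (l1i z) + 2 * j \<and> sum_list (map stepvec ?l) = 0 \<and>
      path_weight w 0 ?l = (path_weight w 0 p + path_weight w z q) + 2 * real j * w (z, i)"
      by (simp add: bnc_len bnc_sum path_weight_append p q bnc_weight)
  qed
qed

lemma norm1_of_intvec: "norm1 (of_intvec x) = real_of_int (l1i x)"
  by (simp add: norm1_def of_intvec_def l1i_def)

lemma norm1_scale: "norm1 (c *\<^sub>R v) = \<bar>c\<bar> * norm1 v"
  by (simp add: norm1_def abs_mult sum_distrib_left)

lemma norm1_nonneg: "0 \<le> norm1 v"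
  by (simp add: norm1_def sum_nonneg)

lemma continuous_norm1: "continuous_on S norm1"
  unfolding norm1_def by (intro continuous_intros)

lemma isCont_norm1: "isCont norm1 x"
  using continuous_norm1[of UNIV] by (auto simp: continuous_on_eq_continuous_at)

lemma norm_le_norm1: "norm v \<le> norm1 v"
  unfolding norm1_def by (rule norm_le_l1_cart)

lemma norm1_le_card_norm: "norm1 v \<le> real CARD('d) * norm (v :: real^'d::finite)"
proof -
  have "norm1 v \<le> (\<Sum>i\<in>(UNIV::'d set). norm v)"
    unfolding norm1_def by (intro sum_mono) (simp add: component_le_norm_cart)
  then show ?thesis by simp
qed

lemma floor_div_tendsto: "(\<lambda>n. real_of_int \<lfloor>real n * c\<rfloor> / real n) \<longlonglongrightarrow> c"
proof (rule tendsto_sandwich[of "\<lambda>n. c - 1 / real n" _ _ "\<lambda>n. c"])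
  show "\<forall>\<^sub>F n in sequentially. c - 1 / real n \<le> real_of_int \<lfloor>real n * c\<rfloor> / real n"
    using eventually_gt_at_top[of "0::nat"]
  proof eventually_elim
    case (elim n)
    then have "real n * c - 1 \<le> real_of_int \<lfloor>real n * c\<rfloor>" by linarith
    then have "(real n * c - 1) / real n \<le> real_of_int \<lfloor>real n * c\<rfloor> / real n"
      using elim by (simp add: divide_right_mono)
    moreover have "c - 1 / real n = (real n * c - 1) / real n" using elim by (simp add: field_simps)
    ultimately show ?case by simp
  qed
  show "\<forall>\<^sub>F n in sequentially. real_of_int \<lfloor>real n * c\<rfloor> / real n \<le> c"
    using eventually_gt_at_top[of "0::nat"]
  proof eventually_elim
    case (elim n)
    then show ?case by (simp add: field_simps)
  qed
  show "(\<lambda>n. c - 1 / real n) \<longlonglongrightarrow> c"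
    using tendsto_diff[OF tendsto_const lim_1_over_n] by simp
qed simp

definition xs :: "real^'d::finite \<Rightarrow> nat \<Rightarrow> int^'d" where
  "xs \<xi> n = (\<chi> i. \<lfloor>real n * \<xi> $ i\<rfloor>)"

lemma xs_tendsto: "(\<lambda>n. (1 / real n) *\<^sub>R of_intvec (xs \<xi> n)) \<longlonglongrightarrow> \<xi>"
proof -
  have "(\<lambda>n. ((1 / real n) *\<^sub>R of_intvec (xs \<xi> n)) $ i) \<longlonglongrightarrow> \<xi> $ i" for i
    using floor_div_tendsto[of "\<xi> $ i"] by (simp add: xs_def of_intvec_def)
  then show ?thesis by (rule vec_tendstoI)
qed

lemma l1_tendsto:
  assumes "(\<lambda>n. (1 / real n) *\<^sub>R of_intvec (x n)) \<longlonglongrightarrow> \<xi>"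
  shows "(\<lambda>n. real_of_int (l1i (x n)) / real n) \<longlonglongrightarrow> norm1 \<xi>"
proof -
  have "(\<lambda>n. norm1 ((1 / real n) *\<^sub>R of_intvec (x n))) \<longlonglongrightarrow> norm1 \<xi>"
    by (rule isCont_tendsto_compose[OF isCont_norm1 assms])
  then show ?thesis by (simp add: norm1_scale norm1_of_intvec)
qed

lemma nat_ceil_div_tendsto:
  assumes "(\<lambda>n. c n / real n) \<longlonglongrightarrow> L" "L \<ge> 0"
  shows "(\<lambda>n. real (nat \<lceil>c n\<rceil>) / real n) \<longlonglongrightarrow> L"
proof -
  have m: "(\<lambda>n. max (c n / real n) 0) \<longlonglongrightarrow> L"
    using tendsto_max[OF assms(1) tendsto_const[of 0]] assms(2) by (simp add: max_def)
  have m2: "(\<lambda>n. max (c n / real n) 0 + 1 / real n) \<longlonglongrightarrow> L"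
    using tendsto_add[OF m lim_1_over_n] by simp
  show ?thesis
  proof (rule tendsto_sandwich[OF _ _ m m2])
    show "\<forall>\<^sub>F n in sequentially. max (c n / real n) 0 \<le> real (nat \<lceil>c n\<rceil>) / real n"
      using eventually_gt_at_top[of "0::nat"]
    proof eventually_elim
      case (elim n)
      have "max (c n) 0 \<le> real (nat \<lceil>c n\<rceil>)" by linarith
      then have "max (c n) 0 / real n \<le> real (nat \<lceil>c n\<rceil>) / real n"
        using elim by (simp add: divide_right_mono)
      moreover have "max (c n) 0 / real n = max (c n / real n) 0"
        using elim by (simp add: max_def field_simps)
      ultimately show ?case by simp
    qed
    show "\<forall>\<^sub>F n in sequentially. real (nat \<lceil>c n\<rceil>) / real n \<le> max (c n / real n) 0 + 1 / real n"
      using eventually_gt_at_top[of "0::nat"]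
    proof eventually_elim
      case (elim n)
      have "real (nat \<lceil>c n\<rceil>) \<le> max (c n) 0 + 1" by linarith
      then have "real (nat \<lceil>c n\<rceil>) / real n \<le> (max (c n) 0 + 1) / real n"
        using elim by (simp add: divide_right_mono)
      moreover have "(max (c n) 0 + 1) / real n = max (c n / real n) 0 + 1 / real n"
        using elim by (simp add: max_def field_simps)
      ultimately show ?case by simp
    qed
  qed
qed

definition Kseq :: "(nat \<Rightarrow> int^'d::finite) \<Rightarrow> real \<Rightarrow> nat \<Rightarrow> nat" where
  "Kseq x \<beta> n = nat (l1i (x n)) + 2 * nat \<lceil>(real n * \<beta> - real_of_int (l1i (x n))) / 2\<rceil>"

lemma Kseq_reach: "x n \<in> reach (Kseq x \<beta> n)"
proof (rule reach_suff)
  let ?c = "nat \<lceil>(real n * \<beta> - real_of_int (l1i (x n))) / 2\<rceil>"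
  have e: "int (Kseq x \<beta> n) - l1i (x n) = 2 * int ?c"
    by (simp add: Kseq_def l1i_nonneg)
  then show "even (int (Kseq x \<beta> n) - l1i (x n))" by simp
  have "0 \<le> int ?c" by (rule of_nat_0_le_iff)
  then show "l1i (x n) \<le> int (Kseq x \<beta> n)" using e by linarith
qed

lemma Kseq_ge: "l1i (x n) \<le> int (Kseq x \<beta> n)"
  using reach_nec[OF Kseq_reach] by blast

lemma Kseq_tendsto:
  assumes "(\<lambda>n. (1 / real n) *\<^sub>R of_intvec (x n)) \<longlonglongrightarrow> \<xi>" "norm1 \<xi> \<le> \<beta>"
  shows "(\<lambda>n. real (Kseq x \<beta> n) / real n) \<longlonglongrightarrow> \<beta>"
proof -
  have l: "(\<lambda>n. real_of_int (l1i (x n)) / real n) \<longlonglongrightarrow> norm1 \<xi>" by (rule l1_tendsto[OF assms(1)])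
  have l': "(\<lambda>n. real (nat (l1i (x n))) / real n) \<longlonglongrightarrow> norm1 \<xi>"
    using l by (simp add: l1i_nonneg)
  have "(\<lambda>n. ((real n * \<beta> - real_of_int (l1i (x n))) / 2) / real n) \<longlonglongrightarrow> (\<beta> - norm1 \<xi>) / 2"
  proof -
    have "(\<lambda>n. (\<beta> - real_of_int (l1i (x n)) / real n) / 2) \<longlonglongrightarrow> (\<beta> - norm1 \<xi>) / 2"
      by (intro tendsto_intros l) auto
    moreover have "\<forall>\<^sub>F n in sequentially. (\<beta> - real_of_int (l1i (x n)) / real n) / 2 =
        ((real n * \<beta> - real_of_int (l1i (x n))) / 2) / real n"
      using eventually_gt_at_top[of "0::nat"] by eventually_elim (simp add: field_simps)
    ultimately show ?thesis by (rule Lim_transform_eventually)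
  qed
  then have c: "(\<lambda>n. real (nat \<lceil>(real n * \<beta> - real_of_int (l1i (x n))) / 2\<rceil>) / real n) \<longlonglongrightarrow> (\<beta> - norm1 \<xi>) / 2"
    by (rule nat_ceil_div_tendsto) (use assms in simp)
  have "(\<lambda>n. real (nat (l1i (x n))) / real n + 2 * (real (nat \<lceil>(real n * \<beta> - real_of_int (l1i (x n))) / 2\<rceil>) / real n))
      \<longlonglongrightarrow> norm1 \<xi> + 2 * ((\<beta> - norm1 \<xi>) / 2)"
    by (intro tendsto_intros l' c)
  moreover have "norm1 \<xi> + 2 * ((\<beta> - norm1 \<xi>) / 2) = \<beta>" by (simp add: field_simps)
  ultimately show ?thesis by (simp add: Kseq_def add_divide_distrib)
qed

lemma Kseq_mono: "\<beta> \<le> \<gamma> \<Longrightarrow> Kseq x \<beta> n \<le> Kseq x \<gamma> n"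
proof -
  assume "\<beta> \<le> \<gamma>"
  then have "real n * \<beta> \<le> real n * \<gamma>" by (simp add: mult_left_mono)
  then have "\<lceil>(real n * \<beta> - real_of_int (l1i (x n))) / 2\<rceil> \<le> \<lceil>(real n * \<gamma> - real_of_int (l1i (x n))) / 2\<rceil>"
    by (intro ceiling_mono) (simp add: divide_right_mono)
  then have "nat \<lceil>(real n * \<beta> - real_of_int (l1i (x n))) / 2\<rceil> \<le> nat \<lceil>(real n * \<gamma> - real_of_int (l1i (x n))) / 2\<rceil>"
    by (rule nat_mono)
  then show ?thesis unfolding Kseq_def by linarith
qed

lemma countable_edges: "countable (UNIV :: ('d::finite edge) set)"
proof -
  have "countable (range (vec_lambda :: ('d \<Rightarrow> int) \<Rightarrow> _))" by simp
  moreover have "range (vec_lambda :: ('d \<Rightarrow> int) \<Rightarrow> _) = UNIV" by (metis surj_def vec_lambda_eta)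
  ultimately show ?thesis by simp
qed

context prob_space
begin

lemma ess_inf_props:
  fixes X :: "'a \<Rightarrow> real"
  assumes Xm: "X \<in> borel_measurable M" and fin: "ess_inf M X > - \<infinity>"
  shows "\<exists>r. ess_inf M X = ereal r \<and> (AE \<omega> in M. r \<le> X \<omega>) \<and> (\<forall>\<epsilon>>0. \<not> (AE \<omega> in M. r + \<epsilon> \<le> X \<omega>))"
proof -
  define S where "S = {ereal c | c. AE \<omega> in M. c \<le> X \<omega>}"
  have E: "ess_inf M X = Sup S" by (simp add: ess_inf_def S_def)
  have below: "AE \<omega> in M. c \<le> X \<omega>" if hc: "ereal c < Sup S" for c
  proof -
    obtain s where "s \<in> S" "ereal c < s" using hc less_Sup_iff by blast
    then obtain c' where "AE \<omega> in M. c' \<le> X \<omega>" "c < c'" by (auto simp: S_def)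
    then show ?thesis by (auto elim: AE_mp)
  qed
  have ninf: "Sup S \<noteq> \<infinity>"
  proof
    assume "Sup S = \<infinity>"
    then have "\<forall>n::nat. AE \<omega> in M. real n \<le> X \<omega>" using below by auto
    then have "AE \<omega> in M. \<forall>n::nat. real n \<le> X \<omega>" by (simp add: AE_all_countable)
    moreover have "\<not> (\<forall>n::nat. real n \<le> X \<omega>)" for \<omega>
      using reals_Archimedean2[of "X \<omega>"] not_le by blast
    ultimately have "AE \<omega> in M. False" by auto
    then show False by simp
  qed
  obtain r where r: "Sup S = ereal r" using ninf fin E by (cases "Sup S") auto
  have "\<forall>n::nat. AE \<omega> in M. r - 1 / real (Suc n) \<le> X \<omega>"
    using below r by simp
  then have "AE \<omega> in M. \<forall>n::nat. r - 1 / real (Suc n) \<le> X \<omega>" by (simp add: AE_all_countable)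
  then have ae: "AE \<omega> in M. r \<le> X \<omega>"
  proof (rule AE_mp, intro AE_I2 impI)
    fix \<omega> assume h: "\<forall>n::nat. r - 1 / real (Suc n) \<le> X \<omega>"
    show "r \<le> X \<omega>"
    proof (rule ccontr)
      assume "\<not> r \<le> X \<omega>"
      then have "0 < r - X \<omega>" by simp
      then obtain n where "inverse (real (Suc n)) < r - X \<omega>" using reals_Archimedean by blast
      with h[rule_format, of n] show False by (simp add: inverse_eq_divide)
    qed
  qed
  have "\<not> (AE \<omega> in M. r + \<epsilon> \<le> X \<omega>)" if "\<epsilon> > 0" for \<epsilon>
  proof
    assume "AE \<omega> in M. r + \<epsilon> \<le> X \<omega>"
    then have "ereal (r + \<epsilon>) \<in> S" by (auto simp: S_def)
    then have "ereal (r + \<epsilon>) \<le> Sup S" by (rule Sup_upper)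
    with r that show False by simp
  qed
  with ae r E show ?thesis by auto
qed

end

locale fpp = prob_space M for M :: "'w measure" +
  fixes t :: "'w \<Rightarrow> 'd::finite edge \<Rightarrow> real" and i0 :: 'd
  assumes meas: "\<And>e. (\<lambda>\<omega>. t \<omega> e) \<in> borel_measurable M"
    and indep: "indep_vars (\<lambda>_. borel) (\<lambda>e \<omega>. t \<omega> e) UNIV"
    and ident: "\<And>e e'. distr M borel (\<lambda>\<omega>. t \<omega> e) = distr M borel (\<lambda>\<omega>. t \<omega> e')"
    and r0_fin: "ess_inf M (\<lambda>\<omega>. t \<omega> (0, i0)) > - \<infinity>"
begin

definition r0r :: real where
  "r0r = (SOME r. ess_inf M (\<lambda>\<omega>. t \<omega> (0, i0)) = ereal r \<and> (AE \<omega> in M. r \<le> t \<omega> (0, i0)) \<and>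
      (\<forall>\<epsilon>>0. \<not> (AE \<omega> in M. r + \<epsilon> \<le> t \<omega> (0, i0))))"

lemma r0r_props: "ess_inf M (\<lambda>\<omega>. t \<omega> (0, i0)) = ereal r0r" "AE \<omega> in M. r0r \<le> t \<omega> (0, i0)"
  "\<And>\<epsilon>. \<epsilon> > 0 \<Longrightarrow> \<not> (AE \<omega> in M. r0r + \<epsilon> \<le> t \<omega> (0, i0))"
  using someI_ex[OF ess_inf_props[OF meas r0_fin]] unfolding r0r_def[symmetric] by blast+

lemma AE_transfer:
  assumes "{x \<in> space borel. P x} \<in> sets borel" "AE \<omega> in M. P (t \<omega> e)"
  shows "AE \<omega> in M. P (t \<omega> e')"
proof -
  have "AE x in distr M borel (\<lambda>\<omega>. t \<omega> e). P x" using AE_distr_iff[OF meas assms(1)] assms(2) by simp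
  then have "AE x in distr M borel (\<lambda>\<omega>. t \<omega> e'). P x" by (subst ident[of e' e])
  then show ?thesis using AE_distr_iff[OF meas assms(1)] by simp
qed

lemma AE_lower: "AE \<omega> in M. \<forall>e. r0r \<le> t \<omega> e"
proof -
  have "AE \<omega> in M. r0r \<le> t \<omega> e" for e
    by (rule AE_transfer[OF _ r0r_props(2)]) simp
  then have "AE \<omega> in M. \<forall>e\<in>UNIV. r0r \<le> t \<omega> e"
    by (intro AE_ball_countable[OF countable_edges, THEN iffD2] ballI)
  then show ?thesis by simp
qed

lemma prob_transfer:
  assumes "A \<in> sets borel"
  shows "prob {\<omega> \<in> space M. t \<omega> e \<in> A} = prob {\<omega> \<in> space M. t \<omega> e' \<in> A}"
proof -
  have "prob {\<omega> \<in> space M. t \<omega> e \<in> A} = measure (distr M borel (\<lambda>\<omega>. t \<omega> e)) A"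
    by (subst measure_distr[OF meas assms]) (auto intro: arg_cong[where f="prob"])
  also have "\<dots> = measure (distr M borel (\<lambda>\<omega>. t \<omega> e')) A" by (simp only: ident[of e e'])
  also have "\<dots> = prob {\<omega> \<in> space M. t \<omega> e' \<in> A}"
    by (subst measure_distr[OF meas assms]) (auto intro: arg_cong[where f="prob"])
  finally show ?thesis .
qed

lemma AE_cheap:
  assumes "\<epsilon> > 0"
  shows "AE \<omega> in M. \<exists>e. t \<omega> e < r0r + \<epsilon>"
proof -
  define A where "A e = (\<lambda>\<omega>. t \<omega> e) -` {r0r + \<epsilon>..} \<inter> space M" for e
  define q where "q = prob (A (0, i0))"
  have Aeq: "A e = {\<omega> \<in> space M. t \<omega> e \<in> {r0r + \<epsilon>..}}" for e by (auto simp: A_def)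
  have Aq: "prob (A e) = q" for e unfolding q_def Aeq by (rule prob_transfer) simp
  have Asets: "A e \<in> sets M" for e unfolding A_def by (rule measurable_sets[OF meas]) simp
  have q1: "q < 1"
  proof (rule ccontr)
    assume "\<not> q < 1"
    then have "prob (A (0, i0)) = 1" using q_def prob_le_1[of "A (0, i0)"] \<open>\<not> q < 1\<close> by linarith
    then have "AE \<omega> in M. \<omega> \<in> A (0, i0)" by (rule AE_prob_1)
    then have "AE \<omega> in M. r0r + \<epsilon> \<le> t \<omega> (0, i0)" by (auto simp: A_def)
    with r0r_props(3)[OF assms] show False by simp
  qed
  have q0: "0 \<le> q" by (simp add: q_def)
  have isets: "indep_sets (\<lambda>e. {(\<lambda>\<omega>. t \<omega> e) -` B \<inter> space M |B. B \<in> sets borel}) UNIV"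
    using indep by (simp add: indep_vars_def2)
  define E :: "nat \<Rightarrow> 'd edge" where "E n = ((\<chi> j. int n), i0)" for n
  have Einj: "inj E" by (auto simp: inj_def E_def vec_eq_iff)
  define N where "N = {\<omega> \<in> space M. \<forall>n. \<omega> \<in> A (E n)}"
  have Nsets: "N \<in> sets M" unfolding N_def
  proof (rule sets.sets_Collect_countable_All)
    fix n
    have "{x \<in> space M. x \<in> A (E n)} = A (E n)" by (auto simp: A_def)
    then show "{x \<in> space M. x \<in> A (E n)} \<in> sets M" using Asets by simp
  qed
  have Nle: "prob N \<le> q ^ k" if "k > 0" for k
  proof -
    have "N \<subseteq> \<Inter> (A ` (E ` {..<k}))" unfolding N_def by auto
    moreover have "(\<Inter> (A ` (E ` {..<k}))) \<in> sets M"
      by (rule sets.finite_INT) (use that Asets in auto)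
    ultimately have "prob N \<le> prob (\<Inter> (A ` (E ` {..<k})))"
      by (rule finite_measure_mono)
    also have "prob (\<Inter> (A ` (E ` {..<k}))) = (\<Prod>j\<in>E ` {..<k}. prob (A j))"
    proof (rule indep_setsD[OF isets])
      show "\<forall>j\<in>E ` {..<k}. A j \<in> {(\<lambda>\<omega>. t \<omega> j) -` B \<inter> space M |B. B \<in> sets borel}"
      proof
        fix j assume "j \<in> E ` {..<k}"
        show "A j \<in> {(\<lambda>\<omega>. t \<omega> j) -` B \<inter> space M |B. B \<in> sets borel}"
          unfolding A_def by (intro CollectI exI[of _ "{r0r + \<epsilon>..}"] conjI) simp_all
      qed
    qed (use that in auto)
    also have "\<dots> = q ^ k" using card_image[OF inj_on_subset[OF Einj]] by (simp add: Aq)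
    finally show ?thesis .
  qed
  have "prob N = 0"
  proof (rule ccontr)
    assume "prob N \<noteq> 0"
    then have "prob N > 0" using measure_nonneg[of M N] by linarith
    then obtain k where k: "q ^ k < prob N" using real_arch_pow_inv q1 by blast
    have "q ^ Suc k \<le> q ^ k" using power_decreasing[of k "Suc k" q] q0 q1 by simp
    with Nle[of "Suc k"] k show False by simp
  qed
  then have "N \<in> null_sets M" using Nsets by (simp add: emeasure_eq_measure null_sets_def)
  then show ?thesis
  proof (rule AE_I')
    show "{x \<in> space M. \<not> (\<exists>e. t x e < r0r + \<epsilon>)} \<subseteq> N"
    proof
      fix x assume x: "x \<in> {x \<in> space M. \<not> (\<exists>e. t x e < r0r + \<epsilon>)}"
      have "x \<in> A (E n)" for n
      proof -
        have "\<not> t x (E n) < r0r + \<epsilon>" using x by blast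
        then show ?thesis using x unfolding A_def by auto
      qed
      then show "x \<in> N" using x unfolding N_def by blast
    qed
  qed
qed

lemma AE_exists: "AE \<omega> in M. P \<omega> \<Longrightarrow> \<exists>\<omega>. P \<omega>"
proof (rule ccontr)
  assume "AE \<omega> in M. P \<omega>" "\<not> (\<exists>\<omega>. P \<omega>)"
  then have "AE \<omega> in M. False" by auto
  then show False by simp
qed

lemma AE_good: "AE \<omega> in M. (\<forall>e. r0r \<le> t \<omega> e) \<and> (\<forall>n::nat. \<exists>e. t \<omega> e < r0r + 1 / real (Suc n))"
  using AE_lower AE_cheap by (simp add: AE_all_countable)

end

abbreviation BB :: "(real^'d::finite) set" where "BB \<equiv> {\<xi>. norm1 \<xi> < 1}"
abbreviation UU :: "(real^'d::finite) set" where "UU \<equiv> {\<xi>. norm1 \<xi> \<le> 1}"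

lemma norm1_add: "norm1 (x + y) \<le> norm1 x + norm1 y"
  unfolding norm1_def by (simp add: sum.distrib[symmetric] sum_mono abs_triangle_ineq)

lemma norm1_convex_comb: "0 \<le> u \<Longrightarrow> 0 \<le> v \<Longrightarrow> norm1 (u *\<^sub>R x + v *\<^sub>R y) \<le> u * norm1 x + v * norm1 y"
  using norm1_add[of "u *\<^sub>R x" "v *\<^sub>R y"] by (simp add: norm1_scale)

lemma convex_UU: "convex UU"
proof (rule convexI)
  fix x y :: "real^'d" and u v :: real
  assume "x \<in> UU" "y \<in> UU" "0 \<le> u" "0 \<le> v" "u + v = 1"
  then have "u * norm1 x + v * norm1 y \<le> u * 1 + v * 1" by (intro add_mono mult_left_mono) auto
  then show "u *\<^sub>R x + v *\<^sub>R y \<in> UU" using norm1_convex_comb[of u v x y] \<open>0 \<le> u\<close> \<open>0 \<le> v\<close> \<open>u + v = 1\<close> by auto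
qed

lemma open_BB: "open BB"
  by (rule open_Collect_less) (auto intro: continuous_norm1)

lemma scale_in_BB: "x \<in> UU \<Longrightarrow> \<bar>s\<bar> < 1 \<Longrightarrow> s *\<^sub>R x \<in> BB"
proof -
  assume "x \<in> UU" "\<bar>s\<bar> < 1"
  then have "\<bar>s\<bar> * norm1 x \<le> \<bar>s\<bar> * 1" by (intro mult_left_mono) auto
  then show ?thesis using \<open>\<bar>s\<bar> < 1\<close> by (simp add: norm1_scale)
qed

lemma zero_in_BB: "0 \<in> BB" by (simp add: norm1_def)

definition psi :: "(real^'d::finite \<Rightarrow> real) \<Rightarrow> real^'d \<Rightarrow> real \<Rightarrow> real" where
  "psi f x s = (f (s *\<^sub>R x) - f 0) / s"

definition RR :: "(real^'d::finite \<Rightarrow> real) \<Rightarrow> real^'d \<Rightarrow> ereal" where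
  "RR f x = ereal (f 0) + (SUP s\<in>{0<..<1}. ereal (psi f x s))"

locale cvx =
  fixes f :: "real^'d::finite \<Rightarrow> real" and lb :: real
  assumes cont: "continuous_on BB f" and conv: "convex_on BB f" and lower: "\<And>x. x \<in> BB \<Longrightarrow> lb \<le> f x"
begin

lemma psi_mono:
  assumes x: "x \<in> UU" and s: "0 < s" "s \<le> s'" "s' < 1"
  shows "psi f x s \<le> psi f x s'"
proof -
  have in1: "s' *\<^sub>R x \<in> BB" using scale_in_BB[OF x] s by auto
  have "s *\<^sub>R x = (1 - (1 - s / s')) *\<^sub>R (s' *\<^sub>R x) + (1 - s / s') *\<^sub>R 0" using s by simp
  then have "f (s *\<^sub>R x) \<le> (1 - (1 - s / s')) * f (s' *\<^sub>R x) + (1 - s / s') * f 0"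
    using convex_onD[OF conv, of "1 - s / s'" "s' *\<^sub>R x" 0] in1 zero_in_BB s by simp
  then have "f (s *\<^sub>R x) - f 0 \<le> (s / s') * (f (s' *\<^sub>R x) - f 0)" by (simp add: algebra_simps)
  moreover have "(s / s') * (f (s' *\<^sub>R x) - f 0) = ((f (s' *\<^sub>R x) - f 0) / s') * s" by simp
  ultimately have "f (s *\<^sub>R x) - f 0 \<le> ((f (s' *\<^sub>R x) - f 0) / s') * s" by (rule ord_le_eq_trans)
  then have "(f (s *\<^sub>R x) - f 0) / s \<le> (f (s' *\<^sub>R x) - f 0) / s'"
    using s by (simp add: pos_divide_le_eq)
  then show ?thesis by (simp add: psi_def)
qed

lemma psi_tendsto:
  assumes x: "x \<in> UU"
  shows "((\<lambda>s. ereal (psi f x s)) \<longlongrightarrow> (SUP s\<in>{0<..<1}. ereal (psi f x s))) (at_left 1)"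
proof (rule order_tendstoI)
  fix y assume "y < (SUP s\<in>{0<..<1}. ereal (psi f x s))"
  then obtain s0 where s0: "s0 \<in> {0<..<1}" "y < ereal (psi f x s0)" by (auto simp: less_SUP_iff)
  have "\<forall>\<^sub>F s in at_left 1. s \<in> {s0<..<1}" using s0 by (intro eventually_at_left_real) auto
  then show "\<forall>\<^sub>F s in at_left 1. y < ereal (psi f x s)"
  proof (rule eventually_mono)
    fix s assume "s \<in> {s0<..<1}"
    then have "psi f x s0 \<le> psi f x s" using psi_mono[OF x, of s0 s] s0 by auto
    then show "y < ereal (psi f x s)" using s0(2) by (simp add: order_less_le_trans)
  qed
next
  fix y assume y: "(SUP s\<in>{0<..<1}. ereal (psi f x s)) < y"
  show "\<forall>\<^sub>F s in at_left 1. ereal (psi f x s) < y"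
  proof (rule eventually_at_left_1)
    fix s :: real assume "0 < s" "s < 1"
    then have "ereal (psi f x s) \<le> (SUP s\<in>{0<..<1}. ereal (psi f x s))" by (intro SUP_upper) auto
    then show "ereal (psi f x s) < y" using y by simp
  qed
qed

lemma SUP_psi_gt: "x \<in> UU \<Longrightarrow> (SUP s\<in>{0<..<1}. ereal (psi f x s)) > - \<infinity>"
proof -
  have "ereal (psi f x (1/2)) \<le> (SUP s\<in>{0<..<1}. ereal (psi f x s))" by (intro SUP_upper) auto
  then show ?thesis by (cases "(SUP s\<in>{0<..<1}. ereal (psi f x s))") auto
qed

lemma RR_tendsto:
  assumes x: "x \<in> UU"
  shows "((\<lambda>s. ereal (f (s *\<^sub>R x))) \<longlongrightarrow> RR f x) (at_left 1)"
proof -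
  let ?S = "(SUP s\<in>{0<..<1}. ereal (psi f x s))"
  have t1: "((\<lambda>s. ereal s) \<longlongrightarrow> ereal 1) (at_left (1::real))"
    by (intro tendsto_intros)
  have t2: "((\<lambda>s. ereal s * ereal (psi f x s)) \<longlongrightarrow> ereal 1 * ?S) (at_left 1)"
    by (rule tendsto_mult_ereal[OF t1 psi_tendsto[OF x]]) auto
  have t3: "((\<lambda>s. ereal (f 0) + ereal s * ereal (psi f x s)) \<longlongrightarrow> ereal (f 0) + ereal 1 * ?S) (at_left 1)"
    by (rule tendsto_add_ereal_general2[OF _ tendsto_const t2]) simp
  have ev: "\<forall>\<^sub>F s in at_left 1. ereal (f 0) + ereal s * ereal (psi f x s) = ereal (f (s *\<^sub>R x))"
  proof (rule eventually_at_left_1)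
    fix s :: real assume "0 < s" "s < 1"
    then show "ereal (f 0) + ereal s * ereal (psi f x s) = ereal (f (s *\<^sub>R x))"
      by (simp add: psi_def)
  qed
  show ?thesis using Lim_transform_eventually[OF t3 ev] by (simp add: RR_def)
qed

lemma RR_lower: "x \<in> UU \<Longrightarrow> ereal lb \<le> RR f x"
proof -
  assume x: "x \<in> UU"
  show ?thesis
  proof (rule tendsto_lowerbound[OF RR_tendsto[OF x] _ trivial_limit_at_left_real])
    show "\<forall>\<^sub>F s in at_left 1. ereal lb \<le> ereal (f (s *\<^sub>R x))"
    proof (rule eventually_at_left_1)
      fix s :: real assume "0 < s" "s < 1"
      then show "ereal lb \<le> ereal (f (s *\<^sub>R x))" using lower scale_in_BB[OF x, of s] by simp
    qed
  qed
qed

lemma RR_interior: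
  assumes x: "x \<in> BB"
  shows "RR f x = ereal (f x)"
proof -
  have "isCont f x" using cont open_BB x continuous_on_eq_continuous_at by blast
  moreover have "((\<lambda>s. s *\<^sub>R x) \<longlongrightarrow> 1 *\<^sub>R x) (at_left (1::real))"
    by (intro tendsto_intros)
  ultimately have "((\<lambda>s. f (s *\<^sub>R x)) \<longlongrightarrow> f x) (at_left 1)"
    using isCont_tendsto_compose[of x f "\<lambda>s. s *\<^sub>R x" "at_left 1"] by simp
  then have "((\<lambda>s. ereal (f (s *\<^sub>R x))) \<longlongrightarrow> ereal (f x)) (at_left 1)" by (rule tendsto_ereal)
  moreover have xU: "x \<in> UU" using x by simp
  ultimately show ?thesis using tendsto_unique[OF trivial_limit_at_left_real RR_tendsto[OF xU]] by blast
qed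

lemma radial_ext_RR: "x \<in> UU \<Longrightarrow> radial_ext f x = RR f x"
proof -
  assume x: "x \<in> UU"
  show ?thesis
  proof (cases "norm1 x < 1")
    case True then show ?thesis by (simp add: radial_ext_def RR_interior)
  next
    case False
    then show ?thesis unfolding radial_ext_def
      using tendsto_Lim[OF trivial_limit_at_left_real RR_tendsto[OF x]] by simp
  qed
qed

lemma radial_tendsto: "x \<in> UU \<Longrightarrow> ((\<lambda>s. ereal (f (s *\<^sub>R x))) \<longlongrightarrow> radial_ext f x) (at_left 1)"
  using RR_tendsto radial_ext_RR by simp

lemma radial_lower: "x \<in> UU \<Longrightarrow> ereal lb \<le> radial_ext f x"
  using RR_lower radial_ext_RR by simp

lemma radial_convex: "convex_ereal_on UU (radial_ext f)"
  unfolding convex_ereal_on_def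
proof (intro ballI allI impI)
  fix x y :: "real^'d" and a :: real
  assume x: "x \<in> UU" and y: "y \<in> UU" and a: "0 < a \<and> a < 1"
  let ?z = "a *\<^sub>R x + (1 - a) *\<^sub>R y"
  have z: "?z \<in> UU" using convexD[OF convex_UU x y, of a "1 - a"] a by simp
  have lx: "((\<lambda>s. ereal a * ereal (f (s *\<^sub>R x))) \<longlongrightarrow> ereal a * radial_ext f x) (at_left 1)"
    by (rule tendsto_cmult_ereal[OF _ radial_tendsto[OF x]]) simp
  have ly: "((\<lambda>s. ereal (1 - a) * ereal (f (s *\<^sub>R y))) \<longlongrightarrow> ereal (1 - a) * radial_ext f y) (at_left 1)"
    by (rule tendsto_cmult_ereal[OF _ radial_tendsto[OF y]]) simp
  have gx: "ereal a * radial_ext f x > - \<infinity>"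
    using radial_lower[OF x] a by (cases "radial_ext f x") auto
  have lxy: "((\<lambda>s. ereal a * ereal (f (s *\<^sub>R x)) + ereal (1 - a) * ereal (f (s *\<^sub>R y))) \<longlongrightarrow>
      ereal a * radial_ext f x + ereal (1 - a) * radial_ext f y) (at_left 1)"
  proof (rule tendsto_add_ereal_general[OF _ lx ly])
    have "ereal (1 - a) * radial_ext f y > - \<infinity>"
      using radial_lower[OF y] a by (cases "radial_ext f y") auto
    then show "\<not> (ereal a * radial_ext f x = \<infinity> \<and> ereal (1 - a) * radial_ext f y = - \<infinity> \<or>
          ereal a * radial_ext f x = - \<infinity> \<and> ereal (1 - a) * radial_ext f y = \<infinity>)"
      using gx by auto
  qed
  show "radial_ext f ?z \<le> ereal a * radial_ext f x + ereal (1 - a) * radial_ext f y"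
  proof (rule tendsto_le[OF trivial_limit_at_left_real lxy radial_tendsto[OF z]])
    show "\<forall>\<^sub>F s in at_left 1. ereal (f (s *\<^sub>R ?z)) \<le> ereal a * ereal (f (s *\<^sub>R x)) + ereal (1 - a) * ereal (f (s *\<^sub>R y))"
    proof (rule eventually_at_left_1)
      fix s :: real assume s: "0 < s" "s < 1"
      have sx: "s *\<^sub>R x \<in> BB" and sy: "s *\<^sub>R y \<in> BB" using scale_in_BB[OF x, of s] scale_in_BB[OF y, of s] s by auto
      have "s *\<^sub>R ?z = (1 - (1 - a)) *\<^sub>R (s *\<^sub>R x) + (1 - a) *\<^sub>R (s *\<^sub>R y)" by (simp add: algebra_simps)
      then have "f (s *\<^sub>R ?z) \<le> (1 - (1 - a)) * f (s *\<^sub>R x) + (1 - a) * f (s *\<^sub>R y)"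
        using convex_onD[OF conv, of "1 - a" "s *\<^sub>R x" "s *\<^sub>R y"] sx sy a by simp
      then show "ereal (f (s *\<^sub>R ?z)) \<le> ereal a * ereal (f (s *\<^sub>R x)) + ereal (1 - a) * ereal (f (s *\<^sub>R y))"
        by simp
    qed
  qed
qed

lemma radial_lsc: "lsc_ereal_on UU (radial_ext f)"
  unfolding lsc_ereal_on_def
proof
  fix x :: "real^'d" assume x: "x \<in> UU"
  show "radial_ext f x \<le> Liminf (at x within UU) (radial_ext f)"
  proof (subst le_Liminf_iff, intro allI impI)
    fix y assume yx: "y < radial_ext f x"
    then have yS: "y < ereal (f 0) + (SUP s\<in>{0<..<1}. ereal (psi f x s))"
      using radial_ext_RR[OF x] by (simp add: RR_def)
    then obtain s where s: "s \<in> {0<..<1}" "y < ereal (f 0) + ereal (psi f x s)"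
    proof (cases y)
      case (real c)
      then have "ereal (c - f 0) < (SUP s\<in>{0<..<1}. ereal (psi f x s))"
        using yS by (cases "(SUP s\<in>{0<..<1}. ereal (psi f x s))") auto
      then obtain s where "s \<in> {0<..<1}" "ereal (c - f 0) < ereal (psi f x s)" by (auto simp: less_SUP_iff)
      then show ?thesis using that real by auto
    next
      case PInf then show ?thesis using yS by simp
    next
      case MInf then show ?thesis using that[of "1/2"] by simp
    qed
    have sx: "s *\<^sub>R x \<in> BB" using scale_in_BB[OF x] s by auto
    have "isCont f (s *\<^sub>R x)" using cont open_BB sx continuous_on_eq_continuous_at by blast
    moreover have "isCont (\<lambda>z. s *\<^sub>R z) x" by (intro continuous_intros)
    ultimately have "isCont (f \<circ> (\<lambda>z. s *\<^sub>R z)) x" using continuous_at_compose by blast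
    then have "isCont (\<lambda>z. f (s *\<^sub>R z)) x" by (simp add: o_def)
    then have "isCont (\<lambda>z. f 0 + psi f z s) x" unfolding psi_def
      by (intro continuous_intros) (use s in auto)
    then have "((\<lambda>z. f 0 + psi f z s) \<longlongrightarrow> f 0 + psi f x s) (at x within UU)"
      unfolding isCont_def by (rule tendsto_within_subset) simp
    then have "((\<lambda>z. ereal (f 0 + psi f z s)) \<longlongrightarrow> ereal (f 0 + psi f x s)) (at x within UU)"
      by (rule tendsto_ereal)
    moreover have "y < ereal (f 0 + psi f x s)" using s(2) by simp
    ultimately have ev0: "\<forall>\<^sub>F z in at x within UU. y < ereal (f 0 + psi f z s)"
      using order_tendstoD(1) by blast
    then have ev: "\<forall>\<^sub>F z in at x within UU. y < ereal (f 0) + ereal (psi f z s)" by simp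
    have ev2: "\<forall>\<^sub>F z in at x within UU. z \<in> UU" by (rule eventually_at_topological[THEN iffD2]) auto
    show "\<forall>\<^sub>F z in at x within UU. y < radial_ext f z"
      using ev ev2
    proof eventually_elim
      case (elim z)
      have "ereal (psi f z s) \<le> (SUP s\<in>{0<..<1}. ereal (psi f z s))" using s by (intro SUP_upper) auto
      then have "ereal (f 0) + ereal (psi f z s) \<le> RR f z" unfolding RR_def by (intro add_left_mono)
      then show ?case using elim radial_ext_RR by auto
    qed
  qed
qed

end

lemma of_intvec_0[simp]: "of_intvec 0 = 0"
  by (simp add: of_intvec_def vec_eq_iff)

lemma l1i_0[simp]: "l1i 0 = 0"
  by (simp add: l1i_def)

lemma loop_parity:
  assumes "x \<in> reach m" "x \<in> reach k" "m \<le> k"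
  shows "\<exists>J. k = m + 2 * J"
proof -
  have "even (int k - l1i x)" "even (int m - l1i x)" using reach_nec assms by blast+
  then have "even ((int k - l1i x) - (int m - l1i x))" by simp
  then have "even (int (k - m))" using assms(3) by (simp add: of_nat_diff)
  then have "even (k - m)" by simp
  then obtain J where "k - m = 2 * J" by blast
  then show ?thesis using assms(3) by (intro exI[of _ J]) simp
qed

lemma seq_lim3:
  assumes "(\<lambda>n. a n) \<longlonglongrightarrow> A" "(\<lambda>n. real (k n) / real n) \<longlonglongrightarrow> 1"
  shows "(\<lambda>n. a n + C / real n + real (k n) / real n * D) \<longlonglongrightarrow> A + 0 + 1 * D"
  by (intro tendsto_intros assms)

locale shp = fpp M t i0 for M :: "'w measure" and t :: "'w \<Rightarrow> 'd::finite edge \<Rightarrow> real" and i0 :: 'd +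
  fixes g go :: "real^'d \<Rightarrow> real"
  assumes g_lim: "\<And>\<xi> \<alpha> k x. \<alpha> > norm1 \<xi> \<Longrightarrow> (\<lambda>n. real (k n) / real n) \<longlonglongrightarrow> \<alpha> \<Longrightarrow>
                  (\<forall>n. x n \<in> reach (k n)) \<Longrightarrow> (\<lambda>n. (1 / real n) *\<^sub>R of_intvec (x n)) \<longlonglongrightarrow> \<xi> \<Longrightarrow>
                  AE \<omega> in M. (\<lambda>n. Gpp (t \<omega>) (k n) (x n) / real n) \<longlonglongrightarrow> \<alpha> * g ((1 / \<alpha>) *\<^sub>R \<xi>)"
    and go_lim: "\<And>\<xi> \<alpha> k y. \<alpha> > norm1 \<xi> \<Longrightarrow> (\<lambda>n. real (k n) / real n) \<longlonglongrightarrow> \<alpha> \<Longrightarrow>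
                  (\<forall>n. y n \<in> reach_o (k n)) \<Longrightarrow> (\<lambda>n. (1 / real n) *\<^sub>R of_intvec (y n)) \<longlonglongrightarrow> \<xi> \<Longrightarrow>
                  AE \<omega> in M. (\<lambda>n. Gpp_o (t \<omega>) (k n) (y n) / real n) \<longlonglongrightarrow> \<alpha> * go ((1 / \<alpha>) *\<^sub>R \<xi>)"
begin

lemma g_lim_K:
  assumes "\<alpha> > norm1 \<xi>"
  shows "AE \<omega> in M. (\<lambda>n. Gpp (t \<omega>) (Kseq (xs \<xi>) \<alpha> n) (xs \<xi> n) / real n) \<longlonglongrightarrow> \<alpha> * g ((1 / \<alpha>) *\<^sub>R \<xi>)"
proof -
  have kt: "(\<lambda>n. real (Kseq (xs \<xi>) \<alpha> n) / real n) \<longlonglongrightarrow> \<alpha>"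
    by (rule Kseq_tendsto[OF xs_tendsto]) (use assms in simp)
  show ?thesis by (rule g_lim[OF assms kt _ xs_tendsto]) (simp add: Kseq_reach)
qed

lemma go_lim_K:
  assumes "\<alpha> > norm1 \<xi>"
  shows "AE \<omega> in M. (\<lambda>n. Gpp_o (t \<omega>) (Kseq (xs \<xi>) \<alpha> n) (xs \<xi> n) / real n) \<longlonglongrightarrow> \<alpha> * go ((1 / \<alpha>) *\<^sub>R \<xi>)"
proof -
  have kt: "(\<lambda>n. real (Kseq (xs \<xi>) \<alpha> n) / real n) \<longlonglongrightarrow> \<alpha>"
    by (rule Kseq_tendsto[OF xs_tendsto]) (use assms in simp)
  have "\<forall>n. xs \<xi> n \<in> reach_o (Kseq (xs \<xi>) \<alpha> n)"
    using reach_sub_reach_o[OF Kseq_reach[of "xs \<xi>" _ \<alpha>] order_refl] by blast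
  then show ?thesis by (rule go_lim[OF assms kt _ xs_tendsto])
qed

lemma div_le_lemma: "real k * r \<le> G \<Longrightarrow> real k / real n * r \<le> G / real n"
  by (metis divide_right_mono of_nat_0_le_iff times_divide_eq_left)

lemma lower_bounds:
  assumes z: "norm1 \<zeta> < 1"
  shows "r0r \<le> g \<zeta>" "min r0r 0 \<le> go \<zeta>"
proof -
  let ?x = "xs \<zeta>" and ?k = "Kseq (xs \<zeta>) 1"
  have kt: "(\<lambda>n. real (?k n) / real n) \<longlonglongrightarrow> 1"
    by (rule Kseq_tendsto[OF xs_tendsto]) (use z in simp)
  have "AE \<omega> in M. (\<forall>e. r0r \<le> t \<omega> e) \<and> (\<lambda>n. Gpp (t \<omega>) (?k n) (?x n) / real n) \<longlonglongrightarrow> g \<zeta>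
     \<and> (\<lambda>n. Gpp_o (t \<omega>) (?k n) (?x n) / real n) \<longlonglongrightarrow> go \<zeta>" (is "AE \<omega> in M. ?P \<omega>")
    using AE_lower g_lim_K[of \<zeta> 1, OF z] go_lim_K[of \<zeta> 1, OF z] by eventually_elim auto
  then obtain \<omega> where "?P \<omega>" using AE_exists by blast
  then have lo: "\<forall>e. r0r \<le> t \<omega> e"
    and l1: "(\<lambda>n. Gpp (t \<omega>) (?k n) (?x n) / real n) \<longlonglongrightarrow> g \<zeta>"
    and l2: "(\<lambda>n. Gpp_o (t \<omega>) (?k n) (?x n) / real n) \<longlonglongrightarrow> go \<zeta>" by auto
  have kt1: "(\<lambda>n. real (?k n) / real n * r0r) \<longlonglongrightarrow> 1 * r0r" by (intro tendsto_intros kt)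
  have kt2: "(\<lambda>n. real (?k n) / real n * min r0r 0) \<longlonglongrightarrow> 1 * min r0r 0" by (intro tendsto_intros kt)
  show "r0r \<le> g \<zeta>"
  proof -
    have "1 * r0r \<le> g \<zeta>"
    proof (rule tendsto_le[OF trivial_limit_sequentially l1 kt1], rule always_eventually, rule allI)
      fix n
      have "real (?k n) * r0r \<le> Gpp (t \<omega>) (?k n) (?x n)"
        by (rule Gpp_lower[OF _ Kseq_reach]) (use lo in auto)
      then show "real (?k n) / real n * r0r \<le> Gpp (t \<omega>) (?k n) (?x n) / real n" by (rule div_le_lemma)
    qed
    then show ?thesis by simp
  qed
  show "min r0r 0 \<le> go \<zeta>"
  proof -
    have "1 * min r0r 0 \<le> go \<zeta>"
    proof (rule tendsto_le[OF trivial_limit_sequentially l2 kt2], rule always_eventually, rule allI)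
      fix n
      have "real (?k n) * min r0r 0 \<le> Gpp_o (t \<omega>) (?k n) (?x n)"
        by (rule Gpp_o_lower[OF _ reach_sub_reach_o[OF Kseq_reach]]) (use lo in auto)
      then show "real (?k n) / real n * min r0r 0 \<le> Gpp_o (t \<omega>) (?k n) (?x n) / real n" by (rule div_le_lemma)
    qed
    then show ?thesis by simp
  qed
qed

lemma go_le_g_scaled:
  assumes a: "norm1 \<xi> < \<tau>" "\<tau> \<le> \<alpha>"
  shows "\<alpha> * go ((1 / \<alpha>) *\<^sub>R \<xi>) \<le> \<tau> * g ((1 / \<tau>) *\<^sub>R \<xi>)"
proof -
  let ?x = "xs \<xi>" and ?k = "Kseq (xs \<xi>) \<alpha>" and ?j = "Kseq (xs \<xi>) \<tau>"
  have "AE \<omega> in M. (\<lambda>n. Gpp (t \<omega>) (?j n) (?x n) / real n) \<longlonglongrightarrow> \<tau> * g ((1 / \<tau>) *\<^sub>R \<xi>)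
     \<and> (\<lambda>n. Gpp_o (t \<omega>) (?k n) (?x n) / real n) \<longlonglongrightarrow> \<alpha> * go ((1 / \<alpha>) *\<^sub>R \<xi>)" (is "AE \<omega> in M. ?P \<omega>")
    using g_lim_K[of \<xi> \<tau>, OF a(1)] go_lim_K[of \<xi> \<alpha>, OF less_le_trans[OF a]] by eventually_elim auto
  then obtain \<omega> where "?P \<omega>" using AE_exists by blast
  then have l1: "(\<lambda>n. Gpp (t \<omega>) (?j n) (?x n) / real n) \<longlonglongrightarrow> \<tau> * g ((1 / \<tau>) *\<^sub>R \<xi>)"
    and l2: "(\<lambda>n. Gpp_o (t \<omega>) (?k n) (?x n) / real n) \<longlonglongrightarrow> \<alpha> * go ((1 / \<alpha>) *\<^sub>R \<xi>)" by auto
  show ?thesis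
  proof (rule tendsto_le[OF trivial_limit_sequentially l1 l2], rule always_eventually, rule allI)
    fix n
    have "Gpp_o (t \<omega>) (?k n) (?x n) \<le> Gpp (t \<omega>) (?j n) (?x n)"
      by (rule Gpp_o_le_Gpp[OF Kseq_reach Kseq_mono[OF a(2)]])
    then show "Gpp_o (t \<omega>) (?k n) (?x n) / real n \<le> Gpp (t \<omega>) (?j n) (?x n) / real n"
      by (simp add: divide_right_mono)
  qed
qed

lemma g0_upper: "g 0 \<le> r0r"
proof -
  let ?x = "\<lambda>n::nat. (0 :: int^'d)" let ?k = "Kseq ?x 1"
  have kt: "(\<lambda>n. real (?k n) / real n) \<longlonglongrightarrow> 1"
    by (rule Kseq_tendsto[of _ 0]) (simp_all add: norm1_def)
  have ae1: "AE \<omega> in M. (\<lambda>n. Gpp (t \<omega>) (?k n) (?x n) / real n) \<longlonglongrightarrow> 1 * g ((1 / 1) *\<^sub>R 0)"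
  proof (rule g_lim[OF _ kt])
    show "\<forall>n. ?x n \<in> reach (?k n)" using Kseq_reach[of ?x _ 1] by blast
  qed (simp_all add: norm1_def)
  have "AE \<omega> in M. (\<forall>n::nat. \<exists>e. t \<omega> e < r0r + 1 / real (Suc n)) \<and>
      (\<lambda>n. Gpp (t \<omega>) (?k n) (?x n) / real n) \<longlonglongrightarrow> g 0" (is "AE \<omega> in M. ?P \<omega>")
    using AE_good ae1 by eventually_elim auto
  then obtain \<omega> where "?P \<omega>" using AE_exists by blast
  then have cheap: "\<And>N::nat. \<exists>e. t \<omega> e < r0r + 1 / real (Suc N)"
    and l1: "(\<lambda>n. Gpp (t \<omega>) (?k n) (?x n) / real n) \<longlonglongrightarrow> g 0" by auto
  have keven: "?k n = 2 * nat \<lceil>real n * 1 / 2\<rceil>" for n by (simp add: Kseq_def)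
  have kge: "n \<le> ?k n" for n
  proof -
    have "real n / 2 \<le> real (nat \<lceil>real n * 1 / 2\<rceil>)" by linarith
    then show ?thesis unfolding keven by linarith
  qed
  have bound: "g 0 \<le> t \<omega> e" for e
  proof -
    obtain z i where e: "e = (z, i)" by (cases e)
    obtain L W where LW: "\<And>j. \<exists>l. length l = 2 * L + 2 * j \<and> sum_list (map stepvec l) = 0 \<and>
        path_weight (t \<omega>) 0 l = W + 2 * real j * t \<omega> e"
      using detour_loop[of "t \<omega>" z i] e by blast
    have ub: "Gpp (t \<omega>) (?k n) (?x n) / real n \<le> (W - 2 * real L * t \<omega> e) / real n + real (?k n) / real n * t \<omega> e"
      if n: "n \<ge> 2 * L" for n
    proof -
      define j where "j = nat \<lceil>real n * 1 / 2\<rceil> - L"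
      have kj: "?k n = 2 * L + 2 * j" using kge[of n] n unfolding j_def keven by simp
      obtain l where l: "length l = 2 * L + 2 * j" "sum_list (map stepvec l) = 0"
        "path_weight (t \<omega>) 0 l = W + 2 * real j * t \<omega> e" using LW by blast
      have "Gpp (t \<omega>) (?k n) (?x n) \<le> path_weight (t \<omega>) 0 l" unfolding kj by (rule Gpp_le) (use l in auto)
      also have "\<dots> = (W - 2 * real L * t \<omega> e) + real (?k n) * t \<omega> e" using l(3) kj by (simp add: algebra_simps)
      finally have "Gpp (t \<omega>) (?k n) (?x n) / real n \<le> ((W - 2 * real L * t \<omega> e) + real (?k n) * t \<omega> e) / real n"
        by (simp add: divide_right_mono)
      then show ?thesis by (simp add: add_divide_distrib)
    qed
    have lim: "(\<lambda>n. (W - 2 * real L * t \<omega> e) / real n + real (?k n) / real n * t \<omega> e) \<longlonglongrightarrow> 0 + 1 * t \<omega> e"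
      by (intro tendsto_intros kt)
    have "g 0 \<le> 0 + 1 * t \<omega> e"
      by (rule tendsto_le[OF trivial_limit_sequentially lim l1]) (use ub in \<open>auto simp: eventually_at_top_linorder\<close>)
    then show ?thesis by simp
  qed
  show ?thesis
  proof (rule ccontr)
    assume "\<not> g 0 \<le> r0r"
    then have "0 < g 0 - r0r" by simp
    then obtain N where N: "inverse (real (Suc N)) < g 0 - r0r" using reals_Archimedean by blast
    obtain e where "t \<omega> e < r0r + 1 / real (Suc N)" using cheap by blast
    with bound[of e] N show False by (simp add: inverse_eq_divide)
  qed
qed

lemma g0_eq: "g 0 = r0r"
  using g0_upper lower_bounds(1)[of 0] by (simp add: norm1_def)

lemma go0_eq: "go 0 = min r0r 0"
proof -
  have a: "go 0 \<le> g 0" using go_le_g_scaled[of 0 1 1] by (simp add: norm1_def)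
  let ?x = "\<lambda>n::nat. (0 :: int^'d)" let ?k = "Kseq ?x 1"
  have kt: "(\<lambda>n. real (?k n) / real n) \<longlonglongrightarrow> 1"
    by (rule Kseq_tendsto[of _ 0]) (simp_all add: norm1_def)
  have ae1: "AE \<omega> in M. (\<lambda>n. Gpp_o (t \<omega>) (?k n) (?x n) / real n) \<longlonglongrightarrow> 1 * go ((1 / 1) *\<^sub>R 0)"
    by (rule go_lim[OF _ kt]) (simp_all add: norm1_def reach_sub_reach_o[OF Kseq_reach[of ?x] order_refl])
  then have "AE \<omega> in M. (\<lambda>n. Gpp_o (t \<omega>) (?k n) (?x n) / real n) \<longlonglongrightarrow> go 0" by simp
  then obtain \<omega> where l: "(\<lambda>n. Gpp_o (t \<omega>) (?k n) (?x n) / real n) \<longlonglongrightarrow> go 0"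
    using AE_exists by blast
  have z0: "(0 :: int^'d) \<in> reach 0" by (auto simp: reach_def)
  have "go 0 \<le> 0"
  proof (rule tendsto_le[OF trivial_limit_sequentially tendsto_const l], rule always_eventually, rule allI)
    fix n
    have "Gpp_o (t \<omega>) (?k n) 0 \<le> Gpp (t \<omega>) 0 0" by (rule Gpp_o_le_Gpp[OF z0]) simp
    also have "\<dots> \<le> path_weight (t \<omega>) 0 []" by (rule Gpp_le) auto
    finally show "Gpp_o (t \<omega>) (?k n) (?x n) / real n \<le> 0" by (simp add: divide_nonpos_nonneg)
  qed
  then show ?thesis using a g0_eq lower_bounds(2)[of 0] by (simp add: norm1_def)
qed


lemma g_le_go:
  assumes r: "r0r \<le> 0" and z: "norm1 \<zeta> < 1"
  shows "g \<zeta> \<le> go \<zeta>"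
proof -
  let ?x = "xs \<zeta>" and ?k = "Kseq (xs \<zeta>) 1"
  have kt: "(\<lambda>n. real (?k n) / real n) \<longlonglongrightarrow> 1"
    by (rule Kseq_tendsto[OF xs_tendsto]) (use z in simp)
  have "AE \<omega> in M. ((\<forall>e. r0r \<le> t \<omega> e) \<and> (\<forall>n::nat. \<exists>e. t \<omega> e < r0r + 1 / real (Suc n))) \<and>
      (\<lambda>n. Gpp (t \<omega>) (?k n) (?x n) / real n) \<longlonglongrightarrow> g \<zeta>
     \<and> (\<lambda>n. Gpp_o (t \<omega>) (?k n) (?x n) / real n) \<longlonglongrightarrow> go \<zeta>" (is "AE \<omega> in M. ?P \<omega>")
    using AE_good g_lim_K[of \<zeta> 1, OF z] go_lim_K[of \<zeta> 1, OF z] by eventually_elim auto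
  then obtain \<omega> where "?P \<omega>" using AE_exists by blast
  then have cheap: "\<And>N::nat. \<exists>e. t \<omega> e < r0r + 1 / real (Suc N)"
    and l1: "(\<lambda>n. Gpp (t \<omega>) (?k n) (?x n) / real n) \<longlonglongrightarrow> g \<zeta>"
    and l2: "(\<lambda>n. Gpp_o (t \<omega>) (?k n) (?x n) / real n) \<longlonglongrightarrow> go \<zeta>" by auto
  let ?w = "t \<omega>"
  have bound: "g \<zeta> \<le> go \<zeta> + 1 / real (Suc N)" for N
  proof -
    obtain e where e: "?w e < r0r + 1 / real (Suc N)" using cheap by blast
    obtain z i where ez: "e = (z, i)" by (cases e)
    obtain L W where LW: "\<And>j. \<exists>l. length l = 2 * L + 2 * j \<and> sum_list (map stepvec l) = 0 \<and>
        path_weight ?w 0 l = W + 2 * real j * ?w e"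
      using detour_loop[of ?w z i] ez by blast
    define C where "C = \<bar>W\<bar> + 2 * real L * \<bar>?w (0, i0)\<bar>"
    have we: "?w e \<le> 1 / real (Suc N)" using e r by simp
    have ub: "Gpp ?w (?k n) (?x n) \<le> Gpp_o ?w (?k n) (?x n) + C + real (?k n) * (1 / real (Suc N))" for n
    proof -
      have xo: "?x n \<in> reach_o (?k n)" by (rule reach_sub_reach_o[OF Kseq_reach order_refl])
      obtain m where m: "m \<le> ?k n" "?x n \<in> reach m" "Gpp ?w m (?x n) \<le> Gpp_o ?w (?k n) (?x n)"
        using Gpp_o_ge[OF xo] by blast
      obtain J where J: "?k n = m + 2 * J" using loop_parity[OF m(2) Kseq_reach m(1)] by blast
      have "Gpp ?w (?k n) (?x n) \<le> Gpp ?w m (?x n) + C + real (?k n) * (1 / real (Suc N))"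
      proof (cases "L \<le> J")
        case True
        obtain l where l: "length l = 2 * L + 2 * (J - L)" "sum_list (map stepvec l) = 0"
          "path_weight ?w 0 l = W + 2 * real (J - L) * ?w e" using LW by blast
        have len: "length l + m = ?k n" using l(1) J True by simp
        have "Gpp ?w (?k n) (?x n) \<le> path_weight ?w 0 l + Gpp ?w m (?x n)"
          using Gpp_loop[OF l(2) m(2), of ?w] len by simp
        moreover have "2 * real (J - L) * ?w e \<le> 2 * real (J - L) * (1 / real (Suc N))"
          using we by (intro mult_left_mono) auto
        moreover have "2 * real (J - L) \<le> real (?k n)" using J by simp
        moreover have "0 \<le> 2 * real L * \<bar>?w (0, i0)\<bar>" by simp
        ultimately show ?thesis using l(3) unfolding C_def
          by (smt (verit) divide_nonneg_nonneg mult_right_mono of_nat_0_le_iff)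
      next
        case False
        have "Gpp ?w (length (bnc i0 J) + m) (?x n) \<le> path_weight ?w 0 (bnc i0 J) + Gpp ?w m (?x n)"
          by (rule Gpp_loop[OF bnc_sum m(2)])
        moreover have "length (bnc i0 J) + m = ?k n" using J by (simp add: bnc_len)
        ultimately have G1: "Gpp ?w (?k n) (?x n) \<le> path_weight ?w 0 (bnc i0 J) + Gpp ?w m (?x n)" by simp
        moreover have "path_weight ?w 0 (bnc i0 J) \<le> 2 * real L * \<bar>?w (0, i0)\<bar>"
        proof -
          have "path_weight ?w 0 (bnc i0 J) = 2 * real J * ?w (0, i0)" by (rule bnc_weight)
          also have "\<dots> \<le> 2 * real J * \<bar>?w (0, i0)\<bar>" by (intro mult_left_mono) auto
          also have "\<dots> \<le> 2 * real L * \<bar>?w (0, i0)\<bar>" using False by (intro mult_right_mono) auto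
          finally show ?thesis .
        qed
        moreover have "0 \<le> real (?k n) * (1 / real (Suc N))" by simp
        moreover have "0 \<le> \<bar>W\<bar>" by simp
        ultimately show ?thesis unfolding C_def by linarith
      qed
      then show ?thesis using m(3) by linarith
    qed
    have lim: "(\<lambda>n. Gpp_o ?w (?k n) (?x n) / real n + C / real n + real (?k n) / real n * (1 / real (Suc N)))
        \<longlonglongrightarrow> go \<zeta> + 0 + 1 * (1 / real (Suc N))"
      by (rule seq_lim3[OF l2 kt])
    have "g \<zeta> \<le> go \<zeta> + 0 + 1 * (1 / real (Suc N))"
    proof (rule tendsto_le[OF trivial_limit_sequentially lim l1], rule always_eventually, rule allI)
      fix n
      have "Gpp ?w (?k n) (?x n) / real n \<le> (Gpp_o ?w (?k n) (?x n) + C + real (?k n) * (1 / real (Suc N))) / real n"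
        using ub[of n] by (simp add: divide_right_mono)
      then show "Gpp ?w (?k n) (?x n) / real n \<le> Gpp_o ?w (?k n) (?x n) / real n + C / real n + real (?k n) / real n * (1 / real (Suc N))"
        by (simp add: add_divide_distrib mult.commute)
    qed
    then show ?thesis by simp
  qed
  show ?thesis
  proof (rule ccontr)
    assume "\<not> g \<zeta> \<le> go \<zeta>"
    then have "0 < g \<zeta> - go \<zeta>" by simp
    then obtain N where N: "inverse (real (Suc N)) < g \<zeta> - go \<zeta>" using reals_Archimedean by blast
    with bound[of N] show False by (simp add: inverse_eq_divide)
  qed
qed

end

lemma grid_choice:
  fixes J h N :: nat
  assumes "J \<le> h" "0 < N"
  shows "\<exists>i. 1 \<le> i \<and> i \<le> N \<and> J \<le> nat \<lceil>real i * real h / real N\<rceil> \<and>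
            real (nat \<lceil>real i * real h / real N\<rceil>) \<le> real J + real h / real N + 1"
proof (cases "h = 0")
  case True
  then show ?thesis using assms by (intro exI[of _ 1]) auto
next
  case False
  then have hp: "0 < real h" by simp
  define q where "q = real J * real N / real h"
  have q0: "0 \<le> q" by (simp add: q_def)
  have qN: "q \<le> real N" unfolding q_def using assms hp
    by (simp add: divide_le_eq mult.commute mult_left_mono)
  define i where "i = max 1 (nat \<lceil>q\<rceil>)"
  have i1: "1 \<le> i" by (simp add: i_def)
  have cN: "\<lceil>q\<rceil> \<le> int N" using qN by (simp add: ceiling_le_iff)
  then have "nat \<lceil>q\<rceil> \<le> N" by linarith
  then have iN: "i \<le> N" unfolding i_def using assms(2) by simp
  have "q \<le> real (nat \<lceil>q\<rceil>)" using q0 by linarith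
  moreover have "nat \<lceil>q\<rceil> \<le> i" by (simp add: i_def)
  ultimately have iq: "q \<le> real i" by linarith
  have iup: "real i * real h / real N \<le> real J + real h / real N"
  proof (cases "nat \<lceil>q\<rceil> \<le> 1")
    case True
    then have "i = 1" by (simp add: i_def)
    then show ?thesis by simp
  next
    case False
    then have "i = nat \<lceil>q\<rceil>" by (simp add: i_def)
    then have "real i < q + 1" using q0 by linarith
    then have "real i * real h / real N \<le> (q + 1) * real h / real N"
      using assms(2) hp by (intro divide_right_mono mult_right_mono) auto
    also have "\<dots> = real J + real h / real N" unfolding q_def using assms(2) hp
      by (simp add: field_simps)
    finally show ?thesis .
  qed
  have low: "real J \<le> real i * real h / real N"
  proof -
    have "real J = q * real h / real N" unfolding q_def using assms(2) hp by (simp add: field_simps)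
    also have "\<dots> \<le> real i * real h / real N"
      using iq hp assms(2) by (intro divide_right_mono mult_right_mono) auto
    finally show ?thesis .
  qed
  show ?thesis
  proof (intro exI[of _ i] conjI i1 iN)
    show "J \<le> nat \<lceil>real i * real h / real N\<rceil>" using low by linarith
    show "real (nat \<lceil>real i * real h / real N\<rceil>) \<le> real J + real h / real N + 1"
      using iup low by linarith
  qed
qed


definition hs :: "(nat \<Rightarrow> int^'d::finite) \<Rightarrow> real \<Rightarrow> nat \<Rightarrow> nat" where
  "hs x \<alpha> n = nat \<lceil>(real n * \<alpha> - real_of_int (l1i (x n))) / 2\<rceil>"

definition mm :: "(nat \<Rightarrow> int^'d::finite) \<Rightarrow> real \<Rightarrow> nat \<Rightarrow> nat \<Rightarrow> nat \<Rightarrow> nat" where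
  "mm x \<alpha> N i n = nat (l1i (x n)) + 2 * nat \<lceil>real i * real (hs x \<alpha> n) / real N\<rceil>"

lemma Kseq_hs: "Kseq x \<alpha> n = nat (l1i (x n)) + 2 * hs x \<alpha> n"
  by (simp add: Kseq_def hs_def)

lemma mm_reach: "x n \<in> reach (mm x \<alpha> N i n)"
proof (rule reach_suff)
  let ?c = "nat \<lceil>real i * real (hs x \<alpha> n) / real N\<rceil>"
  have e: "int (mm x \<alpha> N i n) - l1i (x n) = 2 * int ?c"
    by (simp add: mm_def l1i_nonneg)
  then show "even (int (mm x \<alpha> N i n) - l1i (x n))" by simp
  have "0 \<le> int ?c" by (rule of_nat_0_le_iff)
  then show "l1i (x n) \<le> int (mm x \<alpha> N i n)" using e by linarith
qed

lemma hs_tendsto: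
  assumes "(\<lambda>n. (1 / real n) *\<^sub>R of_intvec (x n)) \<longlonglongrightarrow> \<xi>" "norm1 \<xi> \<le> \<beta>"
  shows "(\<lambda>n. real (hs x \<beta> n) / real n) \<longlonglongrightarrow> (\<beta> - norm1 \<xi>) / 2"
proof -
  have l: "(\<lambda>n. real_of_int (l1i (x n)) / real n) \<longlonglongrightarrow> norm1 \<xi>" by (rule l1_tendsto[OF assms(1)])
  have "(\<lambda>n. ((real n * \<beta> - real_of_int (l1i (x n))) / 2) / real n) \<longlonglongrightarrow> (\<beta> - norm1 \<xi>) / 2"
  proof -
    have "(\<lambda>n. (\<beta> - real_of_int (l1i (x n)) / real n) / 2) \<longlonglongrightarrow> (\<beta> - norm1 \<xi>) / 2"
      by (intro tendsto_intros l) auto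
    moreover have "\<forall>\<^sub>F n in sequentially. (\<beta> - real_of_int (l1i (x n)) / real n) / 2 =
        ((real n * \<beta> - real_of_int (l1i (x n))) / 2) / real n"
      using eventually_gt_at_top[of "0::nat"] by eventually_elim (simp add: field_simps)
    ultimately show ?thesis by (rule Lim_transform_eventually)
  qed
  then show ?thesis unfolding hs_def
    by (rule nat_ceil_div_tendsto) (use assms in simp)
qed

lemma mm_tendsto:
  assumes x: "(\<lambda>n. (1 / real n) *\<^sub>R of_intvec (x n)) \<longlonglongrightarrow> \<xi>" and b: "norm1 \<xi> \<le> \<beta>" and N: "0 < N"
  shows "(\<lambda>n. real (mm x \<beta> N i n) / real n) \<longlonglongrightarrow> norm1 \<xi> + real i * (\<beta> - norm1 \<xi>) / real N"
proof -
  have l: "(\<lambda>n. real (nat (l1i (x n))) / real n) \<longlonglongrightarrow> norm1 \<xi>"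
    using l1_tendsto[OF x] by (simp add: l1i_nonneg)
  have h: "(\<lambda>n. real (hs x \<beta> n) / real n) \<longlonglongrightarrow> (\<beta> - norm1 \<xi>) / 2" by (rule hs_tendsto[OF x b])
  have "(\<lambda>n. (real i / real N) * (real (hs x \<beta> n) / real n)) \<longlonglongrightarrow> (real i / real N) * ((\<beta> - norm1 \<xi>) / 2)"
    by (intro tendsto_intros h)
  then have "(\<lambda>n. (real i * real (hs x \<beta> n) / real N) / real n) \<longlonglongrightarrow> (real i / real N) * ((\<beta> - norm1 \<xi>) / 2)"
    by (simp add: field_simps)
  then have c: "(\<lambda>n. real (nat \<lceil>real i * real (hs x \<beta> n) / real N\<rceil>) / real n) \<longlonglongrightarrow> (real i / real N) * ((\<beta> - norm1 \<xi>) / 2)"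
    by (rule nat_ceil_div_tendsto) (use b in simp)
  have "(\<lambda>n. real (nat (l1i (x n))) / real n + 2 * (real (nat \<lceil>real i * real (hs x \<beta> n) / real N\<rceil>) / real n))
     \<longlonglongrightarrow> norm1 \<xi> + 2 * ((real i / real N) * ((\<beta> - norm1 \<xi>) / 2))"
    by (intro tendsto_intros l c)
  moreover have "norm1 \<xi> + 2 * ((real i / real N) * ((\<beta> - norm1 \<xi>) / 2)) = norm1 \<xi> + real i * (\<beta> - norm1 \<xi>) / real N"
    using N by (simp add: field_simps)
  ultimately show ?thesis by (simp add: mm_def add_divide_distrib)
qed

lemma grid_bound:
  assumes N: "0 < N"
  shows "\<exists>i. 1 \<le> i \<and> i \<le> N \<and> Gpp w (mm x \<alpha> N i n) (x n) \<le>
      Gpp_o w (Kseq x \<alpha> n) (x n) + 2 * (real (hs x \<alpha> n) / real N + 1) * \<bar>w (0, i0)\<bar>"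
proof -
  let ?k = "Kseq x \<alpha> n" and ?l = "nat (l1i (x n))" and ?h = "hs x \<alpha> n"
  have xo: "x n \<in> reach_o ?k" by (rule reach_sub_reach_o[OF Kseq_reach order_refl])
  obtain m where m: "m \<le> ?k" "x n \<in> reach m" "Gpp w m (x n) \<le> Gpp_o w ?k (x n)"
    using Gpp_o_ge[OF xo] by blast
  have rn: "l1i (x n) \<le> int m" "even (int m - l1i (x n))" using reach_nec[OF m(2)] by auto
  then have "even (m - ?l)" using l1i_nonneg[of "x n"]
    by (metis even_of_nat_iff int_nat_eq nat_le_iff of_nat_diff)
  then obtain J where J: "m - ?l = 2 * J" by blast
  have mJ: "m = ?l + 2 * J" using J rn(1) by linarith
  have Jh: "J \<le> ?h" using m(1) mJ Kseq_hs[of x \<alpha> n] by simp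
  obtain i where i: "1 \<le> i" "i \<le> N" "J \<le> nat \<lceil>real i * real ?h / real N\<rceil>"
    "real (nat \<lceil>real i * real ?h / real N\<rceil>) \<le> real J + real ?h / real N + 1"
    using grid_choice[OF Jh N] by blast
  define c where "c = nat \<lceil>real i * real ?h / real N\<rceil>"
  have mm_eq: "mm x \<alpha> N i n = length (bnc i0 (c - J)) + m"
    using i(3) mJ by (simp add: mm_def c_def bnc_len)
  have "Gpp w (mm x \<alpha> N i n) (x n) \<le> path_weight w 0 (bnc i0 (c - J)) + Gpp w m (x n)"
    unfolding mm_eq by (rule Gpp_loop[OF bnc_sum m(2)])
  also have "path_weight w 0 (bnc i0 (c - J)) = 2 * real (c - J) * w (0, i0)" by (rule bnc_weight)
  also have "\<dots> \<le> 2 * real (c - J) * \<bar>w (0, i0)\<bar>" by (intro mult_left_mono) auto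
  also have "\<dots> \<le> 2 * (real ?h / real N + 1) * \<bar>w (0, i0)\<bar>"
  proof (intro mult_right_mono)
    show "2 * real (c - J) \<le> 2 * (real ?h / real N + 1)" using i(3,4) unfolding c_def by (simp add: of_nat_diff)
  qed simp
  finally show ?thesis using m(3) i(1,2) by (intro exI[of _ i]) auto
qed


context shp
begin

lemma go_ge_grid:
  assumes a: "norm1 \<xi> < \<alpha>" and d: "0 < \<delta>"
  shows "\<exists>\<tau>. norm1 \<xi> < \<tau> \<and> \<tau> \<le> \<alpha> \<and> \<tau> * g ((1 / \<tau>) *\<^sub>R \<xi>) \<le> \<alpha> * go ((1 / \<alpha>) *\<^sub>R \<xi>) + \<delta>"
proof (rule ccontr)
  assume H: "\<not> ?thesis"
  let ?x = "xs \<xi>" and ?k = "Kseq (xs \<xi>) \<alpha>" and ?a = "norm1 \<xi>"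
  define tau where "tau N i = ?a + real i * (\<alpha> - ?a) / real N" for N i :: nat
  define V where "V = \<alpha> * go ((1 / \<alpha>) *\<^sub>R \<xi>)"
  have tau_gt: "?a < tau N i" if "0 < N" "0 < i" for N i
    unfolding tau_def using that a by (simp add: divide_pos_pos)
  have tau_le: "tau N i \<le> \<alpha>" if "0 < N" "i \<le> N" for N i
  proof -
    have "real i * (\<alpha> - ?a) / real N \<le> real N * (\<alpha> - ?a) / real N"
      using that a by (intro divide_right_mono mult_right_mono) auto
    then show ?thesis unfolding tau_def using that by simp
  qed
  have inst: "\<forall>N i. AE \<omega> in M. (0 < N \<and> 0 < i \<longrightarrow>
      (\<lambda>n. Gpp (t \<omega>) (mm ?x \<alpha> N i n) (?x n) / real n) \<longlonglongrightarrow> tau N i * g ((1 / tau N i) *\<^sub>R \<xi>))"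
  proof (intro allI)
    fix N i :: nat
    show "AE \<omega> in M. (0 < N \<and> 0 < i \<longrightarrow>
      (\<lambda>n. Gpp (t \<omega>) (mm ?x \<alpha> N i n) (?x n) / real n) \<longlonglongrightarrow> tau N i * g ((1 / tau N i) *\<^sub>R \<xi>))"
    proof (cases "0 < N \<and> 0 < i")
      case True
      have mt: "(\<lambda>n. real (mm ?x \<alpha> N i n) / real n) \<longlonglongrightarrow> tau N i"
        unfolding tau_def by (rule mm_tendsto[OF xs_tendsto]) (use a True in auto)
      have "AE \<omega> in M. (\<lambda>n. Gpp (t \<omega>) (mm ?x \<alpha> N i n) (?x n) / real n) \<longlonglongrightarrow> tau N i * g ((1 / tau N i) *\<^sub>R \<xi>)"
      proof (rule g_lim[OF tau_gt mt _ xs_tendsto])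
        show "\<forall>n. ?x n \<in> reach (mm ?x \<alpha> N i n)" using mm_reach by blast
      qed (use True in auto)
      then show ?thesis by (rule AE_mp) (intro AE_I2 impI, simp)
    next
      case False
      show ?thesis by (rule AE_I2) (use False in blast)
    qed
  qed
  have "AE \<omega> in M. (\<forall>N i. 0 < N \<and> 0 < i \<longrightarrow>
      (\<lambda>n. Gpp (t \<omega>) (mm ?x \<alpha> N i n) (?x n) / real n) \<longlonglongrightarrow> tau N i * g ((1 / tau N i) *\<^sub>R \<xi>)) \<and>
      (\<lambda>n. Gpp_o (t \<omega>) (?k n) (?x n) / real n) \<longlonglongrightarrow> V" (is "AE \<omega> in M. ?P \<omega>")
    using inst go_lim_K[OF a] unfolding V_def by (simp add: AE_all_countable)
  then obtain \<omega> where "?P \<omega>" using AE_exists by blast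
  then have lg: "\<And>N i. 0 < N \<Longrightarrow> 0 < i \<Longrightarrow>
      (\<lambda>n. Gpp (t \<omega>) (mm ?x \<alpha> N i n) (?x n) / real n) \<longlonglongrightarrow> tau N i * g ((1 / tau N i) *\<^sub>R \<xi>)"
    and lo: "(\<lambda>n. Gpp_o (t \<omega>) (?k n) (?x n) / real n) \<longlonglongrightarrow> V" by auto
  let ?w = "t \<omega>"
  define C where "C = \<bar>?w (0, i0)\<bar>"
  have C0: "0 \<le> C" by (simp add: C_def)
  define N where "N = nat \<lceil>4 * (\<alpha> - ?a) * C / \<delta>\<rceil> + 1"
  have N0: "0 < N" by (simp add: N_def)
  have NC: "(\<alpha> - ?a) * C / real N < \<delta> / 4"
  proof -
    have "4 * (\<alpha> - ?a) * C / \<delta> < real N" unfolding N_def by linarith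
    then have "4 * (\<alpha> - ?a) * C < real N * \<delta>" using d by (simp add: divide_less_eq)
    then show ?thesis using N0 by (simp add: divide_less_eq field_simps)
  qed
  have E1: "\<forall>\<^sub>F n in sequentially. Gpp_o ?w (?k n) (?x n) / real n < V + \<delta> / 4"
    using lo d by (intro order_tendstoD(2)) auto
  have hlim: "(\<lambda>n. (2 * C / real N) * (real (hs ?x \<alpha> n) / real n) + 2 * C / real n) \<longlonglongrightarrow>
      (2 * C / real N) * ((\<alpha> - ?a) / 2) + 0"
    by (intro tendsto_intros hs_tendsto[OF xs_tendsto] lim_const_over_n) (use a in simp)
  have "(2 * C / real N) * ((\<alpha> - ?a) / 2) + 0 = (\<alpha> - ?a) * C / real N" using N0 by (simp add: field_simps)
  then have "(2 * C / real N) * ((\<alpha> - ?a) / 2) + 0 < \<delta> / 4" using NC by (simp add: mult.commute)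
  then have E2': "\<forall>\<^sub>F n in sequentially. (2 * C / real N) * (real (hs ?x \<alpha> n) / real n) + 2 * C / real n < \<delta> / 4"
    using hlim by (intro order_tendstoD(2)) auto
  have E3: "\<forall>\<^sub>F n in sequentially. \<forall>i\<in>{1..N}. V + 3 * \<delta> / 4 < Gpp ?w (mm ?x \<alpha> N i n) (?x n) / real n"
  proof (rule eventually_ball_finite[OF finite_atLeastAtMost], rule ballI)
    fix i assume i: "i \<in> {1..N}"
    have "V + \<delta> < tau N i * g ((1 / tau N i) *\<^sub>R \<xi>)"
      using H tau_gt[OF N0, of i] tau_le[OF N0, of i] i unfolding V_def by force
    then have "V + 3 * \<delta> / 4 < tau N i * g ((1 / tau N i) *\<^sub>R \<xi>)" using d by simp
    then show "\<forall>\<^sub>F n in sequentially. V + 3 * \<delta> / 4 < Gpp ?w (mm ?x \<alpha> N i n) (?x n) / real n"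
      using lg[OF N0, of i] i by (intro order_tendstoD(1)) auto
  qed
  have "\<forall>\<^sub>F n in sequentially. 0 < n \<and> Gpp_o ?w (?k n) (?x n) / real n < V + \<delta> / 4 \<and>
      (2 * C / real N) * (real (hs ?x \<alpha> n) / real n) + 2 * C / real n < \<delta> / 4 \<and>
      (\<forall>i\<in>{1..N}. V + 3 * \<delta> / 4 < Gpp ?w (mm ?x \<alpha> N i n) (?x n) / real n)"
    using eventually_gt_at_top[of "0::nat"] E1 E2' E3 by eventually_elim auto
  then obtain n where n: "0 < n" "Gpp_o ?w (?k n) (?x n) / real n < V + \<delta> / 4"
    "(2 * C / real N) * (real (hs ?x \<alpha> n) / real n) + 2 * C / real n < \<delta> / 4"
    "\<forall>i\<in>{1..N}. V + 3 * \<delta> / 4 < Gpp ?w (mm ?x \<alpha> N i n) (?x n) / real n"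
    by (auto simp: eventually_sequentially)
  obtain i where i: "1 \<le> i" "i \<le> N" "Gpp ?w (mm ?x \<alpha> N i n) (?x n) \<le>
      Gpp_o ?w (?k n) (?x n) + 2 * (real (hs ?x \<alpha> n) / real N + 1) * C"
    using grid_bound[OF N0, of ?w ?x \<alpha> n] unfolding C_def by blast
  have "Gpp ?w (mm ?x \<alpha> N i n) (?x n) / real n \<le>
      (Gpp_o ?w (?k n) (?x n) + 2 * (real (hs ?x \<alpha> n) / real N + 1) * C) / real n"
    using i(3) by (simp add: divide_right_mono)
  also have "\<dots> = Gpp_o ?w (?k n) (?x n) / real n + ((2 * C / real N) * (real (hs ?x \<alpha> n) / real n) + 2 * C / real n)"
    using n(1) N0 by (simp add: field_simps)
  also have "\<dots> < V + \<delta> / 4 + \<delta> / 4" using n(2,3) by linarith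
  finally show False using n(4) i(1,2) d by force
qed

end

lemma norm1_pos: "\<xi> \<noteq> 0 \<Longrightarrow> 0 < norm1 \<xi>"
proof -
  assume "\<xi> \<noteq> 0"
  then obtain i where "\<xi> $ i \<noteq> 0" by (auto simp: vec_eq_iff)
  then have "0 < \<bar>\<xi> $ i\<bar>" by simp
  also have "\<bar>\<xi> $ i\<bar> \<le> norm1 \<xi>" unfolding norm1_def
    by (rule member_le_sum) auto
  finally show ?thesis .
qed

locale mainloc = shp M t i0 g go for M :: "'w measure" and t :: "'w \<Rightarrow> 'd::finite edge \<Rightarrow> real"
  and i0 :: 'd and g go :: "real^'d \<Rightarrow> real" +
  assumes g_cont: "continuous_on {\<xi>. norm1 \<xi> < 1} g"
    and g_conv: "convex_on {\<xi>. norm1 \<xi> < 1} g"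
    and go_cont: "continuous_on {\<xi>. norm1 \<xi> < 1} go"
    and go_conv: "convex_on {\<xi>. norm1 \<xi> < 1} go"
begin

sublocale Gc: cvx g r0r
  by unfold_locales (use g_cont g_conv lower_bounds in auto)

sublocale Goc: cvx go "min r0r 0"
  by unfold_locales (use go_cont go_conv lower_bounds in auto)

definition phi :: "real^'d \<Rightarrow> real \<Rightarrow> real" where
  "phi \<xi> \<tau> = \<tau> * g ((1 / \<tau>) *\<^sub>R \<xi>)"

lemma in_BB_div: "norm1 \<xi> < \<tau> \<Longrightarrow> norm1 ((1 / \<tau>) *\<^sub>R \<xi>) < 1"
proof -
  assume a: "norm1 \<xi> < \<tau>"
  then have "0 < \<tau>" using norm1_nonneg[of \<xi>] by linarith
  then show ?thesis using a by (simp add: norm1_scale divide_less_eq)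
qed

lemma h_tendsto:
  assumes x: "\<xi> \<noteq> 0"
  shows "((\<lambda>s. ereal (phi \<xi> (norm1 \<xi> / s))) \<longlongrightarrow>
           ereal (norm1 \<xi>) * radial_ext g ((1 / norm1 \<xi>) *\<^sub>R \<xi>)) (at_left 1)"
proof -
  let ?a = "norm1 \<xi>" let ?\<eta> = "(1 / norm1 \<xi>) *\<^sub>R \<xi>"
  have a0: "0 < ?a" by (rule norm1_pos[OF x])
  have eta: "?\<eta> \<in> UU" using a0 by (simp add: norm1_scale)
  have t1: "((\<lambda>s. ereal (?a / s)) \<longlongrightarrow> ereal (?a / 1)) (at_left (1::real))"
    by (intro tendsto_intros) auto
  have t2: "((\<lambda>s. ereal (?a / s) * ereal (g (s *\<^sub>R ?\<eta>))) \<longlongrightarrow> ereal (?a / 1) * radial_ext g ?\<eta>) (at_left 1)"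
    by (rule tendsto_mult_ereal[OF t1 Gc.radial_tendsto[OF eta]]) (use a0 in auto)
  have ev: "\<forall>\<^sub>F s in at_left 1. ereal (?a / s) * ereal (g (s *\<^sub>R ?\<eta>)) = ereal (phi \<xi> (?a / s))"
  proof (rule eventually_at_left_1)
    fix s :: real assume s: "0 < s" "s < 1"
    have "(1 / (?a / s)) *\<^sub>R \<xi> = s *\<^sub>R ?\<eta>" using s a0 by simp
    then show "ereal (?a / s) * ereal (g (s *\<^sub>R ?\<eta>)) = ereal (phi \<xi> (?a / s))"
      by (simp add: phi_def)
  qed
  show ?thesis using Lim_transform_eventually[OF t2 ev] by simp
qed

lemma h_lower:
  assumes x: "\<xi> \<noteq> 0" and a: "norm1 \<xi> < \<alpha>" and m: "\<And>\<tau>. norm1 \<xi> < \<tau> \<Longrightarrow> \<tau> \<le> \<alpha> \<Longrightarrow> m \<le> phi \<xi> \<tau>"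
  shows "ereal m \<le> ereal (norm1 \<xi>) * radial_ext g ((1 / norm1 \<xi>) *\<^sub>R \<xi>)"
proof (rule tendsto_lowerbound[OF h_tendsto[OF x] _ trivial_limit_at_left_real])
  let ?a = "norm1 \<xi>"
  have a0: "0 < ?a" by (rule norm1_pos[OF x])
  have "\<forall>\<^sub>F s in at_left 1. s \<in> {?a / \<alpha><..<1}" using a a0 by (intro eventually_at_left_real) (simp add: divide_less_eq)
  then show "\<forall>\<^sub>F s in at_left 1. ereal m \<le> ereal (phi \<xi> (?a / s))"
  proof (rule eventually_mono)
    fix s assume s: "s \<in> {?a / \<alpha><..<1}"
    have s0: "0 < s" using s a0 a by (auto intro: less_trans[rotated])
    have "?a < ?a / s" using s s0 a0 by (simp add: less_divide_eq)
    moreover have "?a / s \<le> \<alpha>" using s s0 a0 a by (simp add: divide_le_eq mult.commute divide_less_eq)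
    ultimately show "ereal m \<le> ereal (phi \<xi> (?a / s))" using m by simp
  qed
qed

lemma h_upper_near:
  assumes x: "\<xi> \<noteq> 0" and c: "ereal c < ereal (norm1 \<xi>) * radial_ext g ((1 / norm1 \<xi>) *\<^sub>R \<xi>)"
  shows "\<exists>\<tau>2>norm1 \<xi>. \<forall>\<tau>. norm1 \<xi> < \<tau> \<and> \<tau> < \<tau>2 \<longrightarrow> c < phi \<xi> \<tau>"
proof -
  let ?a = "norm1 \<xi>"
  have a0: "0 < ?a" by (rule norm1_pos[OF x])
  have "\<forall>\<^sub>F s in at_left 1. ereal c < ereal (phi \<xi> (?a / s))"
    by (rule order_tendstoD(1)[OF h_tendsto[OF x] c])
  then obtain b where b: "b < 1" "\<And>y. b < y \<Longrightarrow> y < 1 \<Longrightarrow> c < phi \<xi> (?a / y)"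
    unfolding eventually_at_left_field by auto
  define b' where "b' = max b (1/2)"
  have b'0: "0 < b'" "b' < 1" using b(1) by (auto simp: b'_def)
  show ?thesis
  proof (intro exI[of _ "?a / b'"] conjI allI impI)
    show "?a < ?a / b'" using b'0 a0 by (simp add: less_divide_eq)
    fix \<tau> assume \<tau>: "?a < \<tau> \<and> \<tau> < ?a / b'"
    then have t0: "0 < \<tau>" using a0 by linarith
    have "b' < ?a / \<tau>" using \<tau> t0 b'0 by (simp add: less_divide_eq mult.commute)
    then have "b < ?a / \<tau>" by (simp add: b'_def)
    moreover have "?a / \<tau> < 1" using \<tau> t0 by simp
    ultimately have "c < phi \<xi> (?a / (?a / \<tau>))" using b(2) by blast
    then show "c < phi \<xi> \<tau>" using a0 by simp
  qed
qed


lemma radial_in: "norm1 x < 1 \<Longrightarrow> radial_ext f x = ereal (f x)"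
  by (simp add: radial_ext_def)

lemma phi_cont:
  assumes "norm1 \<xi> < \<tau>3"
  shows "continuous_on {\<tau>3..\<alpha>} (phi \<xi>)"
proof -
  have pos: "0 < \<tau>" if "\<tau> \<in> {\<tau>3..\<alpha>}" for \<tau> using that assms norm1_nonneg[of \<xi>] by auto
  have c1: "continuous_on {\<tau>3..\<alpha>} (\<lambda>\<tau>. (1 / \<tau>) *\<^sub>R \<xi>)"
    by (intro continuous_intros) (use pos in fastforce)
  have "(\<lambda>\<tau>. (1 / \<tau>) *\<^sub>R \<xi>) ` {\<tau>3..\<alpha>} \<subseteq> BB"
  proof (rule image_subsetI)
    fix \<tau> assume "\<tau> \<in> {\<tau>3..\<alpha>}"
    then have "norm1 \<xi> < \<tau>" using assms by auto
    then show "(1 / \<tau>) *\<^sub>R \<xi> \<in> BB" using in_BB_div by simp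
  qed
  then have "continuous_on {\<tau>3..\<alpha>} (\<lambda>\<tau>. g ((1 / \<tau>) *\<^sub>R \<xi>))"
    by (rule continuous_on_compose2[OF g_cont c1])
  then show ?thesis unfolding phi_def by (intro continuous_intros)
qed

lemma iii_gt:
  assumes x: "\<xi> \<noteq> 0" and a: "norm1 \<xi> < \<alpha>"
  shows "ereal \<alpha> * radial_ext go ((1 / \<alpha>) *\<^sub>R \<xi>) = (INF \<tau>\<in>{norm1 \<xi>..\<alpha>}. ereal \<tau> * radial_ext g ((1 / \<tau>) *\<^sub>R \<xi>)) \<and>
    (\<exists>\<tau>\<in>{norm1 \<xi>..\<alpha>}. ereal \<alpha> * radial_ext go ((1 / \<alpha>) *\<^sub>R \<xi>) = ereal \<tau> * radial_ext g ((1 / \<tau>) *\<^sub>R \<xi>))"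
proof -
  let ?a = "norm1 \<xi>"
  define V where "V = \<alpha> * go ((1 / \<alpha>) *\<^sub>R \<xi>)"
  define h where "h \<tau> = ereal \<tau> * radial_ext g ((1 / \<tau>) *\<^sub>R \<xi>)" for \<tau>
  have a0: "0 < ?a" by (rule norm1_pos[OF x])
  have lhs: "ereal \<alpha> * radial_ext go ((1 / \<alpha>) *\<^sub>R \<xi>) = ereal V"
    using radial_in[OF in_BB_div[OF a]] by (simp add: V_def)
  have hin: "h \<tau> = ereal (phi \<xi> \<tau>)" if "?a < \<tau>" for \<tau>
    using radial_in[OF in_BB_div[OF that]] by (simp add: h_def phi_def)
  have Vle: "V \<le> phi \<xi> \<tau>" if "?a < \<tau>" "\<tau> \<le> \<alpha>" for \<tau>
    unfolding V_def phi_def by (rule go_le_g_scaled[OF that])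
  have ha: "ereal V \<le> h ?a" unfolding h_def by (rule h_lower[OF x a Vle])
  have grid: "\<exists>\<tau>. ?a < \<tau> \<and> \<tau> \<le> \<alpha> \<and> phi \<xi> \<tau> \<le> V + e" if "0 < e" for e
    using go_ge_grid[OF a that] unfolding V_def phi_def by blast
  have INF_eq: "(INF \<tau>\<in>{?a..\<alpha>}. h \<tau>) = ereal V"
  proof (rule antisym)
    show "(INF \<tau>\<in>{?a..\<alpha>}. h \<tau>) \<le> ereal V"
    proof (rule ereal_le_epsilon2)
      fix e :: real assume "0 < e"
      then obtain \<tau> where \<tau>: "?a < \<tau>" "\<tau> \<le> \<alpha>" "phi \<xi> \<tau> \<le> V + e" using grid by blast
      have "(INF \<tau>\<in>{?a..\<alpha>}. h \<tau>) \<le> h \<tau>" using \<tau> by (intro INF_lower) auto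
      also have "\<dots> \<le> ereal V + ereal e" using hin[OF \<tau>(1)] \<tau>(3) by simp
      finally show "(INF \<tau>\<in>{?a..\<alpha>}. h \<tau>) \<le> ereal V + ereal e" .
    qed
    show "ereal V \<le> (INF \<tau>\<in>{?a..\<alpha>}. h \<tau>)"
    proof (rule INF_greatest)
      fix \<tau> assume "\<tau> \<in> {?a..\<alpha>}"
      then show "ereal V \<le> h \<tau>"
      proof (cases "\<tau> = ?a")
        case True then show ?thesis using ha by simp
      next
        case False
        then have "?a < \<tau>" "\<tau> \<le> \<alpha>" using \<open>\<tau> \<in> _\<close> by auto
        then show ?thesis using hin Vle by simp
      qed
    qed
  qed
  have att: "\<exists>\<tau>\<in>{?a..\<alpha>}. ereal V = h \<tau>"
  proof (cases "h ?a = ereal V")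
    case True then show ?thesis using a by (intro bexI[of _ ?a]) auto
  next
    case False
    then have "ereal V < h ?a" using ha by simp
    then obtain z where z: "ereal V < z" "z < h ?a" using dense by blast
    then obtain c where cz: "z = ereal c" by (cases z) auto
    have Vc: "V < c" using z cz by simp
    have "ereal c < ereal ?a * radial_ext g ((1 / ?a) *\<^sub>R \<xi>)" using z cz by (simp add: h_def)
    then obtain \<tau>2 where \<tau>2: "?a < \<tau>2" "\<And>\<tau>. ?a < \<tau> \<and> \<tau> < \<tau>2 \<Longrightarrow> c < phi \<xi> \<tau>"
      using h_upper_near[OF x] by blast
    define \<tau>3 where "\<tau>3 = min ((?a + \<tau>2) / 2) \<alpha>"
    have t3: "?a < \<tau>3" "\<tau>3 \<le> \<alpha>" using \<tau>2(1) a by (auto simp: \<tau>3_def)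
    have near: "c < phi \<xi> \<tau>" if "?a < \<tau>" "\<tau> < \<tau>3" for \<tau>
      using \<tau>2(2)[of \<tau>] that by (auto simp: \<tau>3_def)
    obtain \<tau>s where ts: "\<tau>s \<in> {\<tau>3..\<alpha>}" "\<And>y. y \<in> {\<tau>3..\<alpha>} \<Longrightarrow> phi \<xi> \<tau>s \<le> phi \<xi> y"
      using continuous_attains_inf[OF compact_Icc _ phi_cont[OF t3(1)], of \<alpha>] t3 by auto
    have tsa: "?a < \<tau>s" "\<tau>s \<le> \<alpha>" using ts(1) t3 by auto
    have "phi \<xi> \<tau>s \<le> V"
    proof (rule field_le_epsilon)
      fix e :: real assume e: "0 < e"
      define e' where "e' = min e ((c - V) / 2)"
      have e'0: "0 < e'" using e Vc by (simp add: e'_def field_simps)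
      obtain \<tau> where \<tau>: "?a < \<tau>" "\<tau> \<le> \<alpha>" "phi \<xi> \<tau> \<le> V + e'" using grid[OF e'0] by blast
      have "\<not> \<tau> < \<tau>3"
      proof
        assume "\<tau> < \<tau>3"
        then have "c < phi \<xi> \<tau>" using near \<tau>(1) by blast
        moreover have "V + e' < c"
        proof -
          define D where "D = (c - V) / 2"
          have "e' \<le> D" unfolding e'_def D_def by (rule min.cobounded2)
          moreover have "V + D < c" using Vc by (simp add: D_def field_simps)
          ultimately show ?thesis by linarith
        qed
        ultimately show False using \<tau>(3) by simp
      qed
      then have "\<tau> \<in> {\<tau>3..\<alpha>}" using \<tau> by auto
      then have "phi \<xi> \<tau>s \<le> phi \<xi> \<tau>" by (rule ts(2))
      also have "\<dots> \<le> V + e" using \<tau>(3) by (simp add: e'_def)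
      finally show "phi \<xi> \<tau>s \<le> V + e" .
    qed
    then have "phi \<xi> \<tau>s = V" using Vle[OF tsa] by simp
    then show ?thesis using tsa hin[OF tsa(1)] by (intro bexI[of _ \<tau>s]) auto
  qed
  show ?thesis using lhs INF_eq att unfolding h_def by auto
qed

lemma vii:
  assumes e: "norm1 \<eta> = 1"
  shows "radial_ext go \<eta> = radial_ext g \<eta>"
proof (rule antisym)
  have eU: "\<eta> \<in> UU" using e by simp
  have en: "\<eta> \<noteq> 0" using e by (auto simp: norm1_def)
  show "radial_ext go \<eta> \<le> radial_ext g \<eta>"
  proof (rule tendsto_le[OF trivial_limit_at_left_real Gc.radial_tendsto[OF eU] Goc.radial_tendsto[OF eU]])
    show "\<forall>\<^sub>F s in at_left 1. ereal (go (s *\<^sub>R \<eta>)) \<le> ereal (g (s *\<^sub>R \<eta>))"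
    proof (rule eventually_at_left_1)
      fix s :: real assume s: "0 < s" "s < 1"
      have "norm1 (s *\<^sub>R \<eta>) < 1" using s e by (simp add: norm1_scale)
      then show "ereal (go (s *\<^sub>R \<eta>)) \<le> ereal (g (s *\<^sub>R \<eta>))"
        using go_le_g_scaled[of "s *\<^sub>R \<eta>" 1 1] by simp
    qed
  qed
  show "radial_ext g \<eta> \<le> radial_ext go \<eta>"
  proof (rule dense_le)
    fix y assume y: "y < radial_ext g \<eta>"
    show "y \<le> radial_ext go \<eta>"
    proof (cases y)
      case MInf then show ?thesis by simp
    next
      case PInf then show ?thesis using y by simp
    next
      case (real c)
      have "ereal c < ereal (norm1 \<eta>) * radial_ext g ((1 / norm1 \<eta>) *\<^sub>R \<eta>)" using y real e by simp
      then obtain \<tau>2 where \<tau>2: "1 < \<tau>2" "\<And>\<tau>. 1 < \<tau> \<and> \<tau> < \<tau>2 \<Longrightarrow> c < phi \<eta> \<tau>"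
        using h_upper_near[OF en] e by auto
      have ev: "\<forall>\<^sub>F s in at_left 1. ereal (s * c) \<le> ereal (go (s *\<^sub>R \<eta>))"
      proof -
        have "\<forall>\<^sub>F s in at_left 1. s \<in> {max (1 / \<tau>2) (1/2)<..<1}"
          using \<tau>2(1) by (intro eventually_at_left_real) auto
        then show ?thesis
        proof (rule eventually_mono)
          fix s assume s: "s \<in> {max (1 / \<tau>2) (1/2)<..<1}"
          then have s0: "0 < s" "s < 1" by auto
          define \<alpha> where "\<alpha> = 1 / s"
          have a1: "norm1 \<eta> < \<alpha>" using s0 e by (simp add: \<alpha>_def)
          have a2: "\<alpha> < \<tau>2" using s s0 \<tau>2(1) by (auto simp: \<alpha>_def divide_less_eq mult.commute)
          have sc: "(1 / \<alpha>) *\<^sub>R \<eta> = s *\<^sub>R \<eta>" by (simp add: \<alpha>_def)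
          have "c \<le> \<alpha> * go ((1 / \<alpha>) *\<^sub>R \<eta>)"
          proof (rule ccontr)
            define A where "A = \<alpha> * go ((1 / \<alpha>) *\<^sub>R \<eta>)"
            assume "\<not> c \<le> \<alpha> * go ((1 / \<alpha>) *\<^sub>R \<eta>)"
            then have Ac: "A < c" by (simp add: A_def)
            define D where "D = (c - A) / 2"
            have d: "0 < D" using Ac by (simp add: D_def)
            have AD: "A + D < c" using Ac by (simp add: D_def field_simps)
            obtain \<tau> where \<tau>: "norm1 \<eta> < \<tau>" "\<tau> \<le> \<alpha>"
              "\<tau> * g ((1 / \<tau>) *\<^sub>R \<eta>) \<le> \<alpha> * go ((1 / \<alpha>) *\<^sub>R \<eta>) + D"
              using go_ge_grid[OF a1 d] by blast
            have c1: "c < phi \<eta> \<tau>" using \<tau>2(2)[of \<tau>] \<tau> a2 e by auto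
            have c2: "phi \<eta> \<tau> \<le> A + D"
              using \<tau>(3) by (simp add: phi_def A_def)
            show False using c1 c2 AD by linarith
          qed
          then have "s * c \<le> s * (\<alpha> * go ((1 / \<alpha>) *\<^sub>R \<eta>))" using s0 by (simp add: mult_left_mono)
          also have "\<dots> = go (s *\<^sub>R \<eta>)" using s0 sc by (simp add: \<alpha>_def)
          finally show "ereal (s * c) \<le> ereal (go (s *\<^sub>R \<eta>))" by simp
        qed
      qed
      have lim: "((\<lambda>s. ereal (s * c)) \<longlongrightarrow> ereal (1 * c)) (at_left (1::real))"
        by (intro tendsto_intros)
      have "ereal (1 * c) \<le> radial_ext go \<eta>"
        by (rule tendsto_le[OF trivial_limit_at_left_real Goc.radial_tendsto[OF eU] lim ev])
      then show ?thesis using real by simp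
    qed
  qed
qed

end

theorem lemma4p1:
  fixes M :: "'w measure"
    and t :: "'w \<Rightarrow> 'd::finite edge \<Rightarrow> real"
    and g go :: "real^'d \<Rightarrow> real"
    and i0 :: 'd
  assumes dim: "CARD('d) \<ge> 2"
    and P: "prob_space M"
    and meas: "\<And>e. (\<lambda>\<omega>. t \<omega> e) \<in> borel_measurable M"
    and indep: "prob_space.indep_vars M (\<lambda>_. borel) (\<lambda>e \<omega>. t \<omega> e) UNIV"
    and ident: "\<And>e e'. distr M borel (\<lambda>\<omega>. t \<omega> e) = distr M borel (\<lambda>\<omega>. t \<omega> e')"
    and r0_fin: "ess_inf M (\<lambda>\<omega>. t \<omega> (0, i0)) > - \<infinity>"
    and moment: "(\<integral>\<^sup>+ \<omega>. ennreal ((Min ((\<lambda>e. max (t \<omega> e) 0) ` origin_edges)) ^ CARD('d)) \<partial>M) < \<infinity>"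
    and g_cont: "continuous_on {\<xi>. norm1 \<xi> < 1} g"
    and g_conv: "convex_on {\<xi>. norm1 \<xi> < 1} g"
    and go_cont: "continuous_on {\<xi>. norm1 \<xi> < 1} go"
    and go_conv: "convex_on {\<xi>. norm1 \<xi> < 1} go"
    and g_lim: "\<And>\<xi> \<alpha> k x. \<alpha> > norm1 \<xi> \<Longrightarrow> (\<lambda>n. real (k n) / real n) \<longlonglongrightarrow> \<alpha> \<Longrightarrow>
                  (\<forall>n. x n \<in> reach (k n)) \<Longrightarrow> (\<lambda>n. (1 / real n) *\<^sub>R of_intvec (x n)) \<longlonglongrightarrow> \<xi> \<Longrightarrow>
                  AE \<omega> in M. (\<lambda>n. Gpp (t \<omega>) (k n) (x n) / real n) \<longlonglongrightarrow> \<alpha> * g ((1 / \<alpha>) *\<^sub>R \<xi>)"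
    and go_lim: "\<And>\<xi> \<alpha> k y. \<alpha> > norm1 \<xi> \<Longrightarrow> (\<lambda>n. real (k n) / real n) \<longlonglongrightarrow> \<alpha> \<Longrightarrow>
                  (\<forall>n. y n \<in> reach_o (k n)) \<Longrightarrow> (\<lambda>n. (1 / real n) *\<^sub>R of_intvec (y n)) \<longlonglongrightarrow> \<xi> \<Longrightarrow>
                  AE \<omega> in M. (\<lambda>n. Gpp_o (t \<omega>) (k n) (y n) / real n) \<longlonglongrightarrow> \<alpha> * go ((1 / \<alpha>) *\<^sub>R \<xi>)"
  shows
    "let r0 = ess_inf M (\<lambda>\<omega>. t \<omega> (0, i0)); U = {\<xi>::real^'d. norm1 \<xi> \<le> 1};
         G = radial_ext g; Go = radial_ext go in
     \<comment> \<open>the radial limits defining the extension exist\<close>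
     (\<forall>\<xi>. norm1 \<xi> = 1 \<longrightarrow>
        (\<exists>L. ((\<lambda>s. ereal (g (s *\<^sub>R \<xi>))) \<longlongrightarrow> L) (at_left 1) \<and> L > - \<infinity>) \<and>
        (\<exists>L. ((\<lambda>s. ereal (go (s *\<^sub>R \<xi>))) \<longlongrightarrow> L) (at_left 1) \<and> L > - \<infinity>)) \<and>
     \<comment> \<open>(i)\<close>
     G 0 = r0 \<and> Go 0 = min r0 0 \<and>
     \<comment> \<open>(ii)\<close>
     (r0 \<le> 0 \<longrightarrow> (\<forall>\<xi>\<in>U. G \<xi> = Go \<xi>)) \<and>
     (r0 > 0 \<longrightarrow> (\<exists>\<epsilon>>0. \<epsilon> \<le> 1 \<and> (\<forall>\<xi>. norm1 \<xi> < \<epsilon> \<longrightarrow> go \<xi> < g \<xi>))) \<and>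
     \<comment> \<open>(iii)\<close>
     (\<forall>\<xi> \<alpha>. \<xi> \<noteq> 0 \<and> \<alpha> \<ge> norm1 \<xi> \<longrightarrow>
        ereal \<alpha> * Go ((1 / \<alpha>) *\<^sub>R \<xi>) =
          (INF \<tau>\<in>{norm1 \<xi>..\<alpha>}. ereal \<tau> * G ((1 / \<tau>) *\<^sub>R \<xi>)) \<and>
        (\<exists>\<tau>\<in>{norm1 \<xi>..\<alpha>}. ereal \<alpha> * Go ((1 / \<alpha>) *\<^sub>R \<xi>) = ereal \<tau> * G ((1 / \<tau>) *\<^sub>R \<xi>))) \<and>
     (\<forall>\<xi>. norm1 \<xi> = 1 \<longrightarrow> Go \<xi> = G \<xi>) \<and>
     \<comment> \<open>(iv)\<close>
     convex_ereal_on U G \<and> lsc_ereal_on U G \<and> convex_ereal_on U Go \<and> lsc_ereal_on U Go"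
proof -
  interpret mainloc M t i0 g go
  proof (intro mainloc.intro shp.intro fpp.intro fpp_axioms.intro shp_axioms.intro mainloc_axioms.intro)
    show "prob_space M" by (rule P)
  qed (use meas indep ident r0_fin g_lim go_lim g_cont g_conv go_cont go_conv in auto)
  have r0: "ess_inf M (\<lambda>\<omega>. t \<omega> (0, i0)) = ereal r0r" by (rule r0r_props(1))
  have n0: "norm1 (0::real^'d) = 0" by (simp add: norm1_def)
  have C1: "\<forall>\<xi>. norm1 \<xi> = 1 \<longrightarrow>
        (\<exists>L. ((\<lambda>s. ereal (g (s *\<^sub>R \<xi>))) \<longlongrightarrow> L) (at_left 1) \<and> L > - \<infinity>) \<and>
        (\<exists>L. ((\<lambda>s. ereal (go (s *\<^sub>R \<xi>))) \<longlongrightarrow> L) (at_left 1) \<and> L > - \<infinity>)"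
  proof (intro allI impI conjI)
    fix \<xi> :: "real^'d" assume "norm1 \<xi> = 1"
    then have xU: "\<xi> \<in> UU" by simp
    show "\<exists>L. ((\<lambda>s. ereal (g (s *\<^sub>R \<xi>))) \<longlongrightarrow> L) (at_left 1) \<and> L > - \<infinity>"
      using Gc.radial_tendsto[OF xU] Gc.radial_lower[OF xU]
      by (intro exI[of _ "radial_ext g \<xi>"]) (auto intro: less_le_trans[of _ "ereal r0r"])
    show "\<exists>L. ((\<lambda>s. ereal (go (s *\<^sub>R \<xi>))) \<longlongrightarrow> L) (at_left 1) \<and> L > - \<infinity>"
    proof (intro exI[of _ "radial_ext go \<xi>"] conjI)
      show "((\<lambda>s. ereal (go (s *\<^sub>R \<xi>))) \<longlongrightarrow> radial_ext go \<xi>) (at_left 1)"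
        by (rule Goc.radial_tendsto[OF xU])
      have lo: "ereal (min r0r 0) \<le> radial_ext go \<xi>" by (rule Goc.radial_lower[OF xU])
      show "- \<infinity> < radial_ext go \<xi>" using lo by (cases "radial_ext go \<xi>") (auto simp: min_def split: if_splits)
    qed
  qed
  have C2: "radial_ext g 0 = ereal r0r" using radial_in[of 0 g] n0 g0_eq by simp
  have C3: "radial_ext go 0 = min (ereal r0r) 0"
    using radial_in[of 0 go] n0 go0_eq by (simp add: min_def zero_ereal_def)
  have C4: "ereal r0r \<le> 0 \<longrightarrow> (\<forall>\<xi>\<in>UU. radial_ext g \<xi> = radial_ext go \<xi>)"
  proof (intro impI ballI)
    assume "ereal r0r \<le> 0"
    then have r: "r0r \<le> 0" by (simp add: zero_ereal_def)
    have eq: "g z = go z" if "norm1 z < 1" for z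
      using g_le_go[OF r that] go_le_g_scaled[of z 1 1] that by simp
    fix \<xi> :: "real^'d" assume xU: "\<xi> \<in> UU"
    have "RR g \<xi> = RR go \<xi>" unfolding RR_def psi_def
    proof (intro arg_cong2[where f="(+)"] SUP_cong refl)
      show "ereal (g 0) = ereal (go 0)" using eq[of 0] n0 by simp
      fix s :: real assume "s \<in> {0<..<1}"
      then have "norm1 (s *\<^sub>R \<xi>) < 1" using scale_in_BB[OF xU, of s] by simp
      then show "ereal ((g (s *\<^sub>R \<xi>) - g 0) / s) = ereal ((go (s *\<^sub>R \<xi>) - go 0) / s)"
        using eq[of "s *\<^sub>R \<xi>"] eq[of 0] n0 by simp
    qed
    then show "radial_ext g \<xi> = radial_ext go \<xi>" using Gc.radial_ext_RR[OF xU] Goc.radial_ext_RR[OF xU] by simp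
  qed
  have C5: "ereal r0r > 0 \<longrightarrow> (\<exists>\<epsilon>>0. \<epsilon> \<le> 1 \<and> (\<forall>\<xi>. norm1 \<xi> < \<epsilon> \<longrightarrow> go \<xi> < g \<xi>))"
  proof
    assume "ereal r0r > 0"
    then have r: "0 < r0r" by (simp add: zero_ereal_def)
    have "isCont g 0" using g_cont open_BB zero_in_BB continuous_on_eq_continuous_at by blast
    moreover have "isCont go 0" using go_cont open_BB zero_in_BB continuous_on_eq_continuous_at by blast
    ultimately have "isCont (\<lambda>z. g z - go z) 0" by (intro continuous_intros)
    then obtain d where d: "0 < d" "\<And>x'. dist x' 0 < d \<Longrightarrow> dist (g x' - go x') (g 0 - go 0) < r0r"
      using r unfolding continuous_at_eps_delta by blast
    have f0: "g 0 - go 0 = r0r" using g0_eq go0_eq r by simp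
    show "\<exists>\<epsilon>>0. \<epsilon> \<le> 1 \<and> (\<forall>\<xi>. norm1 \<xi> < \<epsilon> \<longrightarrow> go \<xi> < g \<xi>)"
    proof (intro exI[of _ "min d 1"] conjI allI impI)
      show "0 < min d 1" using d by simp
      show "min d 1 \<le> 1" by simp
      fix \<xi> :: "real^'d" assume "norm1 \<xi> < min d 1"
      then have "norm \<xi> < d" using norm_le_norm1[of \<xi>] by simp
      then have "dist (g \<xi> - go \<xi>) r0r < r0r" using d(2)[of \<xi>] f0 by (simp add: dist_norm)
      then show "go \<xi> < g \<xi>" by (simp add: dist_real_def abs_less_iff)
    qed
  qed
  have C6: "\<forall>\<xi> \<alpha>. \<xi> \<noteq> 0 \<and> \<alpha> \<ge> norm1 \<xi> \<longrightarrow>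
        ereal \<alpha> * radial_ext go ((1 / \<alpha>) *\<^sub>R \<xi>) =
          (INF \<tau>\<in>{norm1 \<xi>..\<alpha>}. ereal \<tau> * radial_ext g ((1 / \<tau>) *\<^sub>R \<xi>)) \<and>
        (\<exists>\<tau>\<in>{norm1 \<xi>..\<alpha>}. ereal \<alpha> * radial_ext go ((1 / \<alpha>) *\<^sub>R \<xi>) = ereal \<tau> * radial_ext g ((1 / \<tau>) *\<^sub>R \<xi>))"
  proof (intro allI impI)
    fix \<xi> :: "real^'d" and \<alpha> :: real
    assume h: "\<xi> \<noteq> 0 \<and> \<alpha> \<ge> norm1 \<xi>"
    show "ereal \<alpha> * radial_ext go ((1 / \<alpha>) *\<^sub>R \<xi>) =
          (INF \<tau>\<in>{norm1 \<xi>..\<alpha>}. ereal \<tau> * radial_ext g ((1 / \<tau>) *\<^sub>R \<xi>)) \<and>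
        (\<exists>\<tau>\<in>{norm1 \<xi>..\<alpha>}. ereal \<alpha> * radial_ext go ((1 / \<alpha>) *\<^sub>R \<xi>) = ereal \<tau> * radial_ext g ((1 / \<tau>) *\<^sub>R \<xi>))"
    proof (cases "norm1 \<xi> < \<alpha>")
      case True
      then show ?thesis using iii_gt h by blast
    next
      case False
      then have aeq: "\<alpha> = norm1 \<xi>" using h by simp
      have a0: "0 < norm1 \<xi>" using norm1_pos h by blast
      have "norm1 ((1 / \<alpha>) *\<^sub>R \<xi>) = 1" using aeq a0 by (simp add: norm1_scale)
      then have "radial_ext go ((1 / \<alpha>) *\<^sub>R \<xi>) = radial_ext g ((1 / \<alpha>) *\<^sub>R \<xi>)" by (rule vii)
      then show ?thesis using aeq by simp
    qed
  qed
  have C7: "\<forall>\<xi>. norm1 \<xi> = 1 \<longrightarrow> radial_ext go \<xi> = radial_ext g \<xi>" using vii by blast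
  show ?thesis unfolding Let_def r0
    using C1 C2 C3 C4 C5 C6 C7 Gc.radial_convex Gc.radial_lsc Goc.radial_convex Goc.radial_lsc
    by blast
qed

end
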